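(* Let $F$ be a Montel space, $t_0\in\mathbb R$, $\varepsilon>0$. (i) Assume $\mathbf F\in C([t_0,t_0+\varepsilon];F)$ (resp. $C([t_0-\varepsilon,t_0];F)$, resp. $C([t_0-\varepsilon,t_0+\varepsilon];F)$) and for each $f'\in F'$ the function $t\mapsto F_{f'}(t)=\langle f',\mathbf F(t)\rangle$ has a right derivative (resp. left derivative, resp. derivative) at $t_0$. Then $\mathbf F$ has a right derivative (resp. left derivative, resp. derivative) at $t_0$ in $F$, and it is the element of $F=(F'_b)'_b$ given by $f'\mapsto\frac{d^+}{dt}F_{f'}(t_0)$ (resp. $f'\mapsto\frac{d^-}{dt}F_{f'}(t_0)$, resp. $f'\mapsto\frac{d}{dt}F_{f'}(t_0)$). (ii) Let $E$ also be a Montel space. Assume $\mathbf Q\in C([t_0,t_0+\varepsilon];\mathcal L_b(E,F))$ (resp. $C([t_0-\varepsilon,t_0];\mathcal L_b(E,F))$, resp. $C([t_0-\varepsilon,t_0+\varepsilon];\mathcal L_b(E,F))$) and for each $e\in E$, $f'\in F'$ the function $t\mapsto F_{e,f'}(t)=\langle f',\mathbf Q(t)e\rangle$ has a right derivative (resp. left derivative, resp. derivative) at $t_0$. Then $\mathbf Q$ has a right derivative (resp. left derivative, resp. derivative) at $t_0$ in $\mathcal L_b(E,F)$, equal to the element of $\mathcal L(E,F)=\mathcal L(E,(F'_b)'_b)$ given by $e\mapsto(f'\mapsto\frac{d^+}{dt}F_{e,f'}(t_0))$ (resp. with $\frac{d^-}{dt}$, resp. $\frac{d}{dt}$).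
   Context: $F'_b$ denotes the strong dual; $\mathcal L_b(E,F)$ is the space of continuous linear maps $E\to F$ with the topology of uniform convergence on bounded sets. Montel spaces are reflexive, so $F=(F'_b)'_b$. *)

theory Defs
  imports "HOL-Analysis.Analysis"
begin

text \<open>Real topological vector spaces are modelled by types of sort
  real_vector and t2_space (Hausdorff); the class topology is the vector
  space topology.\<close>

definition tvs_space :: "'a::{real_vector,topological_space} itself \<Rightarrow> bool" where
  "tvs_space _ \<longleftrightarrow>
     continuous_on UNIV (\<lambda>p::'a \<times> 'a. fst p + snd p) \<and>
     continuous_on UNIV (\<lambda>p::real \<times> 'a. fst p *\<^sub>R snd p)"

definition locally_convex_space :: "'a::{real_vector,topological_space} itself \<Rightarrow> bool" where
  "locally_convex_space _ \<longleftrightarrow>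
     (\<forall>U::'a set. open U \<and> 0 \<in> U \<longrightarrow> (\<exists>V. open V \<and> 0 \<in> V \<and> convex V \<and> V \<subseteq> U))"

definition tvs_bounded :: "'a::{real_vector,topological_space} set \<Rightarrow> bool" where
  "tvs_bounded B \<longleftrightarrow>
     (\<forall>U. open U \<and> 0 \<in> U \<longrightarrow> (\<exists>s>0. \<forall>t. t > s \<longrightarrow> B \<subseteq> (\<lambda>x. t *\<^sub>R x) ` U))"

definition tvs_balanced :: "'a::real_vector set \<Rightarrow> bool" where
  "tvs_balanced A \<longleftrightarrow> (\<forall>x\<in>A. \<forall>c::real. \<bar>c\<bar> \<le> 1 \<longrightarrow> c *\<^sub>R x \<in> A)"

definition tvs_absorbing :: "'a::real_vector set \<Rightarrow> bool" where
  "tvs_absorbing A \<longleftrightarrow> (\<forall>x. \<exists>r>0. \<forall>c::real. \<bar>c\<bar> \<le> r \<longrightarrow> c *\<^sub>R x \<in> A)"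

definition tvs_barrel :: "'a::{real_vector,topological_space} set \<Rightarrow> bool" where
  "tvs_barrel A \<longleftrightarrow> closed A \<and> convex A \<and> tvs_balanced A \<and> tvs_absorbing A"

definition barrelled_space :: "'a::{real_vector,topological_space} itself \<Rightarrow> bool" where
  "barrelled_space _ \<longleftrightarrow> (\<forall>A::'a set. tvs_barrel A \<longrightarrow> 0 \<in> interior A)"

definition montel_space :: "'a::{real_vector,t2_space} itself \<Rightarrow> bool" where
  "montel_space T \<longleftrightarrow> tvs_space T \<and> locally_convex_space T \<and> barrelled_space T \<and>
     (\<forall>B::'a set. tvs_bounded B \<and> closed B \<longrightarrow> compact B)"

text \<open>Continuous linear maps, the space L(E,F); the dual F' is L(F,real).\<close>
definition cont_linear :: "('a::{real_vector,topological_space} \<Rightarrow> 'b::{real_vector,topological_space}) \<Rightarrow> bool" where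
  "cont_linear T \<longleftrightarrow> linear T \<and> continuous_on UNIV T"

text \<open>Convergence in L_b(E,F): uniformly on bounded subsets of E.\<close>
definition Lb_tendsto ::
  "('i \<Rightarrow> 'a::{real_vector,topological_space} \<Rightarrow> 'b::{real_vector,topological_space})
    \<Rightarrow> ('a \<Rightarrow> 'b) \<Rightarrow> 'i filter \<Rightarrow> bool" where
  "Lb_tendsto G L F \<longleftrightarrow>
     (\<forall>B. tvs_bounded B \<longrightarrow> (\<forall>U. open U \<and> 0 \<in> U \<longrightarrow>
        eventually (\<lambda>s. \<forall>e\<in>B. G s e - L e \<in> U) F))"

definition Lb_continuous_on ::
  "real set \<Rightarrow> (real \<Rightarrow> 'a::{real_vector,topological_space} \<Rightarrow> 'b::{real_vector,topological_space}) \<Rightarrow> bool" where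
  "Lb_continuous_on S Q \<longleftrightarrow>
     (\<forall>t\<in>S. cont_linear (Q t)) \<and> (\<forall>t\<in>S. Lb_tendsto Q (Q t) (at t within S))"

end

theory Submission
  imports Defs
begin


definition seminorm :: "('a::real_vector \<Rightarrow> real) \<Rightarrow> bool" where
  "seminorm p \<longleftrightarrow> (\<forall>x y. p (x + y) \<le> p x + p y) \<and> (\<forall>c x. p (c *\<^sub>R x) = \<bar>c\<bar> * p x)"

lemma seminorm_add: "seminorm p \<Longrightarrow> p (x + y) \<le> p x + p y"
  by (simp add: seminorm_def)
lemma seminorm_scale: "seminorm p \<Longrightarrow> p (c *\<^sub>R x) = \<bar>c\<bar> * p x"
  by (simp add: seminorm_def)
lemma seminorm_0: "seminorm p \<Longrightarrow> p 0 = 0"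
  using seminorm_scale[of p 0 0] by simp
lemma seminorm_minus: "seminorm p \<Longrightarrow> p (- x) = p x"
  using seminorm_scale[of p "-1" x] by simp
lemma seminorm_nonneg: "seminorm p \<Longrightarrow> 0 \<le> p x"
  using seminorm_add[of p x "-x"] seminorm_minus[of p x] seminorm_0[of p] by simp
lemma seminorm_diff: "seminorm p \<Longrightarrow> p x - p y \<le> p (x - y)"
  using seminorm_add[of p "x - y" y] by simp
lemma seminorm_abs_diff: "seminorm p \<Longrightarrow> \<bar>p x - p y\<bar> \<le> p (x - y)"
  using seminorm_diff[of p x y] seminorm_diff[of p y x] seminorm_minus[of p "x - y"]
  by (simp add: abs_le_iff)
lemma seminorm_triangle3: "seminorm p \<Longrightarrow> p (x + y + z) \<le> p x + p y + p z"
  by (smt (verit) seminorm_add)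

section \<open>Basic TVS facts\<close>

lemma tvs_add_cont:
  fixes f g :: "'b::topological_space \<Rightarrow> 'a::{real_vector,t2_space}"
  assumes T: "tvs_space TYPE('a)" and "continuous_on S f" "continuous_on S g"
  shows "continuous_on S (\<lambda>x. f x + g x)"
proof -
  have "continuous_on S ((\<lambda>p::'a\<times>'a. fst p + snd p) \<circ> (\<lambda>x. (f x, g x)))"
    apply (rule continuous_on_compose)
     apply (rule continuous_on_Pair; fact)
    using T unfolding tvs_space_def by (meson continuous_on_subset top_greatest)
  then show ?thesis by (simp add: o_def)
qed

lemma tvs_scale_cont:
  fixes f :: "'b::topological_space \<Rightarrow> real" and g :: "'b \<Rightarrow> 'a::{real_vector,t2_space}"
  assumes T: "tvs_space TYPE('a)" and "continuous_on S f" "continuous_on S g"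
  shows "continuous_on S (\<lambda>x. f x *\<^sub>R g x)"
proof -
  have "continuous_on S ((\<lambda>p::real\<times>'a. fst p *\<^sub>R snd p) \<circ> (\<lambda>x. (f x, g x)))"
    apply (rule continuous_on_compose)
     apply (rule continuous_on_Pair; fact)
    using T unfolding tvs_space_def by (meson continuous_on_subset top_greatest)
  then show ?thesis by (simp add: o_def)
qed

lemma tvs_minus_cont:
  fixes g :: "'b::topological_space \<Rightarrow> 'a::{real_vector,t2_space}"
  assumes T: "tvs_space TYPE('a)" and "continuous_on S g"
  shows "continuous_on S (\<lambda>x. - g x)"
  using tvs_scale_cont[OF T continuous_on_const[of S "-1::real"] assms(2)] by simp

lemma tvs_diff_cont:
  fixes f g :: "'b::topological_space \<Rightarrow> 'a::{real_vector,t2_space}"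
  assumes T: "tvs_space TYPE('a)" and "continuous_on S f" "continuous_on S g"
  shows "continuous_on S (\<lambda>x. f x - g x)"
  using tvs_add_cont[OF T assms(2) tvs_minus_cont[OF T assms(3)]] by simp

lemma tvs_tendsto_add:
  fixes f g :: "'b \<Rightarrow> 'a::{real_vector,t2_space}"
  assumes T: "tvs_space TYPE('a)" and "(f \<longlongrightarrow> a) F" "(g \<longlongrightarrow> b) F"
  shows "((\<lambda>x. f x + g x) \<longlongrightarrow> a + b) F"
proof -
  have c: "isCont (\<lambda>p::'a\<times>'a. fst p + snd p) (a, b)"
    using T unfolding tvs_space_def by (simp add: continuous_on_eq_continuous_at)
  show ?thesis
    using isCont_tendsto_compose[OF c tendsto_Pair[OF assms(2,3)]] by simp
qed

lemma tvs_tendsto_scale: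
  fixes f :: "'b \<Rightarrow> real" and g :: "'b \<Rightarrow> 'a::{real_vector,t2_space}"
  assumes T: "tvs_space TYPE('a)" and "(f \<longlongrightarrow> a) F" "(g \<longlongrightarrow> b) F"
  shows "((\<lambda>x. f x *\<^sub>R g x) \<longlongrightarrow> a *\<^sub>R b) F"
proof -
  have c: "isCont (\<lambda>p::real\<times>'a. fst p *\<^sub>R snd p) (a, b)"
    using T unfolding tvs_space_def by (simp add: continuous_on_eq_continuous_at)
  show ?thesis
    using isCont_tendsto_compose[OF c tendsto_Pair[OF assms(2,3)]] by simp
qed

lemma tvs_open_preimage:
  fixes h :: "'a::{real_vector,t2_space} \<Rightarrow> 'c::topological_space"
  assumes "continuous_on UNIV h" "open U"
  shows "open {x. h x \<in> U}"
  using open_vimage[OF assms(2,1)] by (simp add: vimage_def)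

lemma tvs_absorbing_open:
  fixes W :: "'a::{real_vector,t2_space} set"
  assumes T: "tvs_space TYPE('a)" and W: "open W" "0 \<in> W"
  shows "\<exists>r>0. \<forall>c. \<bar>c\<bar> \<le> r \<longrightarrow> c *\<^sub>R x \<in> W"
proof -
  have "continuous_on UNIV (\<lambda>c::real. c *\<^sub>R x)"
    by (rule tvs_scale_cont[OF T continuous_on_id continuous_on_const])
  then have "open {c::real. c *\<^sub>R x \<in> W}" using tvs_open_preimage W(1) by blast
  moreover have "(0::real) \<in> {c. c *\<^sub>R x \<in> W}" using W by simp
  ultimately obtain e where e: "e > 0" "ball (0::real) e \<subseteq> {c. c *\<^sub>R x \<in> W}"
    using open_contains_ball by blast
  show ?thesis
    apply (rule exI[of _ "e/2"]) using e by (auto simp: subset_iff dist_real_def)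
qed



lemma seminorm_base:
  fixes U :: "'a::{real_vector,t2_space} set"
  assumes T: "tvs_space TYPE('a)" and LC: "locally_convex_space TYPE('a)"
    and U: "open U" "0 \<in> U"
  shows "\<exists>p. seminorm p \<and> continuous_on UNIV p \<and> {x. p x < 1} \<subseteq> U"
proof -
  obtain V where V: "open V" "0 \<in> V" "convex V" "V \<subseteq> U"
    using LC U unfolding locally_convex_space_def by blast
  define W where "W = V \<inter> {x. - x \<in> V}"
  have cneg: "continuous_on UNIV (\<lambda>x::'a. - x)"
    by (rule tvs_minus_cont[OF T continuous_on_id])
  have Wopen: "open W" unfolding W_def
    using tvs_open_preimage[OF cneg V(1)] V(1) by blast
  have W0: "0 \<in> W" using V by (simp add: W_def)
  have Wsym: "- x \<in> W" if "x \<in> W" for x using that by (simp add: W_def)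
  have Wconv: "convex W" unfolding W_def
  proof (rule convex_Int[OF V(3)])
    show "convex {x. - x \<in> V}"
      unfolding convex_def
    proof (intro ballI allI impI)
      fix x y :: 'a and u v :: real
      assume "x \<in> {x. - x \<in> V}" "y \<in> {x. - x \<in> V}" "0 \<le> u" "0 \<le> v" "u + v = 1"
      then have "u *\<^sub>R (- x) + v *\<^sub>R (- y) \<in> V" using V(3) unfolding convex_def by blast
      then show "u *\<^sub>R x + v *\<^sub>R y \<in> {x. - x \<in> V}" by (simp add: algebra_simps)
    qed
  qed
  have Wsub: "W \<subseteq> U" using V by (auto simp: W_def)
  have Wshrink: "c *\<^sub>R x \<in> W" if "x \<in> W" "0 \<le> c" "c \<le> 1" for x c
  proof -
    have "c *\<^sub>R x + (1 - c) *\<^sub>R 0 \<in> W"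
      using Wconv[unfolded convex_def, rule_format, of x 0 c "1 - c"] that W0 by simp
    then show ?thesis by simp
  qed
  have Wbal: "c *\<^sub>R x \<in> W" if "x \<in> W" "\<bar>c\<bar> \<le> 1" for x c
  proof (cases "c \<ge> 0")
    case True then show ?thesis using Wshrink that by auto
  next
    case False
    then have "(- c) *\<^sub>R (- x) \<in> W" using Wshrink[OF Wsym[OF that(1)], of "-c"] that by auto
    then show ?thesis by simp
  qed
  define P where "P x = {r. 0 < r \<and> inverse r *\<^sub>R x \<in> W}" for x
  define p where "p x = Inf (P x)" for x
  have Pne: "P x \<noteq> {}" for x
  proof -
    obtain r0 where r0: "r0 > 0" "\<forall>c. \<bar>c\<bar> \<le> r0 \<longrightarrow> c *\<^sub>R x \<in> W"
      using tvs_absorbing_open[OF T Wopen W0] by blast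
    then have "inverse r0 \<in> P x" by (auto simp: P_def)
    then show ?thesis by blast
  qed
  have Pbdd: "bdd_below (P x)" for x
    by (rule bdd_belowI[of _ 0]) (auto simp: P_def)
  have Pmono: "r' \<in> P x" if "r \<in> P x" "r \<le> r'" for r r' x
  proof -
    have r: "r > 0" "inverse r *\<^sub>R x \<in> W" using that by (auto simp: P_def)
    have "(r / r') *\<^sub>R (inverse r *\<^sub>R x) \<in> W"
      using Wshrink[OF r(2), of "r / r'"] r that by auto
    moreover have "(r / r') *\<^sub>R (inverse r *\<^sub>R x) = inverse r' *\<^sub>R x"
      using r by (simp add: field_simps)
    ultimately show ?thesis using r that by (auto simp: P_def)
  qed
  have P2: "p x \<le> r" if "r \<in> P x" for x r
    unfolding p_def using that Pbdd[of x] by (simp add: cInf_lower)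
  have P3: "r \<in> P x" if lt: "p x < r" for x r
  proof -
    obtain r0 where "r0 \<in> P x" "r0 < r"
      using cInf_lessD[OF Pne, of x r] lt unfolding p_def by blast
    then show ?thesis using Pmono by auto
  qed
  have pnn: "0 \<le> p x" for x
    unfolding p_def by (rule cInf_greatest[OF Pne]) (auto simp: P_def)
  have sub: "p (x + y) \<le> p x + p y" for x y
  proof (rule field_le_epsilon)
    fix e :: real assume e: "e > 0"
    define a where "a = p x + e/2"
    define b where "b = p y + e/2"
    have a: "a > 0" "inverse a *\<^sub>R x \<in> W" using P3[of x a] e pnn[of x] by (auto simp: a_def P_def)
    have b: "b > 0" "inverse b *\<^sub>R y \<in> W" using P3[of y b] e pnn[of y] by (auto simp: b_def P_def)
    have "(a / (a + b)) *\<^sub>R (inverse a *\<^sub>R x) + (b / (a + b)) *\<^sub>R (inverse b *\<^sub>R y) \<in> W"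
      using Wconv[unfolded convex_def, rule_format, of "inverse a *\<^sub>R x" "inverse b *\<^sub>R y" "a / (a + b)" "b / (a + b)"] a b
      by (simp add: add_divide_distrib[symmetric])
    moreover have "(a / (a + b)) *\<^sub>R (inverse a *\<^sub>R x) + (b / (a + b)) *\<^sub>R (inverse b *\<^sub>R y)
        = inverse (a + b) *\<^sub>R (x + y)"
      using a b by (simp add: field_simps scaleR_add_right)
    ultimately have "a + b \<in> P (x + y)" using a b by (auto simp: P_def)
    then have "p (x + y) \<le> a + b" by (rule P2)
    then show "p (x + y) \<le> p x + p y + e" by (simp add: a_def b_def)
  qed
  have scale_le: "p (c *\<^sub>R x) \<le> \<bar>c\<bar> * p x" if "c \<noteq> 0" for c x
  proof (rule field_le_epsilon)
    fix e :: real assume e: "e > 0"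
    define r where "r = p x + e / \<bar>c\<bar>"
    have r: "r > 0" "inverse r *\<^sub>R x \<in> W" using P3[of x r] e pnn[of x] that by (auto simp: r_def P_def)
    have "sgn c *\<^sub>R (inverse r *\<^sub>R x) \<in> W" using Wbal[OF r(2)] by (simp add: abs_sgn_eq)
    moreover have "sgn c *\<^sub>R (inverse r *\<^sub>R x) = inverse (\<bar>c\<bar> * r) *\<^sub>R (c *\<^sub>R x)"
      using that r by (simp add: sgn_if field_simps)
    ultimately have "inverse (\<bar>c\<bar> * r) *\<^sub>R (c *\<^sub>R x) \<in> W" by metis
    then have "\<bar>c\<bar> * r \<in> P (c *\<^sub>R x)" using r that unfolding P_def by simp
    then have "p (c *\<^sub>R x) \<le> \<bar>c\<bar> * r" by (rule P2)
    also have "\<dots> = \<bar>c\<bar> * p x + e" using that by (simp add: r_def field_simps)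
    finally show "p (c *\<^sub>R x) \<le> \<bar>c\<bar> * p x + e" .
  qed
  have p0: "p 0 = 0"
  proof -
    have "p 0 \<le> e" if "e > 0" for e using P2[of e 0] that W0 by (auto simp: P_def)
    then have "p 0 \<le> 0 + e" if "e > 0" for e using that by simp
    then have "p 0 \<le> 0" by (rule field_le_epsilon)
    then show ?thesis using pnn[of 0] by simp
  qed
  have scale: "p (c *\<^sub>R x) = \<bar>c\<bar> * p x" for c x
  proof (cases "c = 0")
    case True then show ?thesis using p0 by simp
  next
    case False
    have "p x = p (inverse c *\<^sub>R (c *\<^sub>R x))" using False by simp
    also have "\<dots> \<le> \<bar>inverse c\<bar> * p (c *\<^sub>R x)" using scale_le[of "inverse c" "c *\<^sub>R x"] False by simp
    finally have "\<bar>c\<bar> * p x \<le> p (c *\<^sub>R x)" using False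
      by (simp add: field_simps abs_inverse)
    then show ?thesis using scale_le[OF False, of x] by simp
  qed
  have sn: "seminorm p" unfolding seminorm_def using sub scale by blast
  have ltW: "p x < 1 \<Longrightarrow> x \<in> W" for x using P3[of x 1] by (simp add: P_def)
  have ltW': "p x < e \<Longrightarrow> e > 0 \<Longrightarrow> inverse e *\<^sub>R x \<in> W" for x e
    using P3[of x e] by (simp add: P_def)
  have Wlt: "p x < 1" if "x \<in> W" for x
  proof -
    have "continuous_on UNIV (\<lambda>c::real. c *\<^sub>R x)"
      by (rule tvs_scale_cont[OF T continuous_on_id continuous_on_const])
    then have "open {c::real. c *\<^sub>R x \<in> W}" using tvs_open_preimage Wopen by blast
    moreover have "(1::real) \<in> {c. c *\<^sub>R x \<in> W}" using that by simp
    ultimately obtain d where d: "d > 0" "ball (1::real) d \<subseteq> {c. c *\<^sub>R x \<in> W}"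
      using open_contains_ball by blast
    have "(1 + d/2) *\<^sub>R x \<in> W" using d by (auto simp: subset_iff dist_real_def)
    then have "inverse (1 + d/2) \<in> P x" using d by (simp add: P_def)
    then have "p x \<le> inverse (1 + d/2)" by (rule P2)
    also have "\<dots> < 1" using d by (simp add: field_simps)
    finally show ?thesis .
  qed
  have cont: "continuous_on UNIV p"
  proof (rule continuous_at_imp_continuous_on, intro ballI)
    fix y :: 'a
    show "isCont p y"
      unfolding isCont_def tendsto_iff
    proof (intro allI impI)
      fix e :: real assume e: "e > 0"
      have cm: "continuous_on UNIV (\<lambda>x. inverse e *\<^sub>R (x - y))"
        by (rule tvs_scale_cont[OF T continuous_on_const tvs_diff_cont[OF T continuous_on_id continuous_on_const]])
      have "open {x. inverse e *\<^sub>R (x - y) \<in> W}" by (rule tvs_open_preimage[OF cm Wopen])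
      moreover have "y \<in> {x. inverse e *\<^sub>R (x - y) \<in> W}" using W0 by simp
      moreover have "dist (p x) (p y) < e" if "inverse e *\<^sub>R (x - y) \<in> W" for x
      proof -
        have "p (inverse e *\<^sub>R (x - y)) < 1" using Wlt that by blast
        moreover have "p (x - y) = e * p (inverse e *\<^sub>R (x - y))" using e scale[of "inverse e" "x - y"] by simp
        ultimately have "p (x - y) < e * 1" using e by (metis mult_strict_left_mono)
        then show ?thesis using seminorm_abs_diff[OF sn, of x y] by (simp add: dist_real_def)
      qed
      ultimately show "\<forall>\<^sub>F x in at y. dist (p x) (p y) < e"
        unfolding eventually_at_topological by blast
    qed
  qed
  show ?thesis using sn cont ltW Wsub by blast
qed

lemma seminorm_open_ball:
  fixes p :: "'a::{real_vector,t2_space} \<Rightarrow> real"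
  assumes T: "tvs_space TYPE('a)" and "continuous_on UNIV p"
  shows "open {x. p (x - y) < e}"
proof -
  have "continuous_on UNIV (\<lambda>x. p (x - y))"
    by (rule continuous_on_compose2[OF assms(2) tvs_diff_cont[OF T continuous_on_id continuous_on_const]]) auto
  then show ?thesis using tvs_open_preimage[of "\<lambda>x. p (x - y)" "{..<e}"] by auto
qed



definition hb_good :: "('a::real_vector \<Rightarrow> real) \<Rightarrow> ('a \<times> real) set \<Rightarrow> bool" where
  "hb_good p G \<longleftrightarrow> (\<forall>x a b. (x,a)\<in>G \<longrightarrow> (x,b)\<in>G \<longrightarrow> a = b) \<and>
     (\<forall>x y a b. (x,a)\<in>G \<longrightarrow> (y,b)\<in>G \<longrightarrow> (x+y, a+b)\<in>G) \<and>
     (\<forall>x a c. (x,a)\<in>G \<longrightarrow> (c *\<^sub>R x, c*a)\<in>G) \<and> (\<forall>x a. (x,a)\<in>G \<longrightarrow> a \<le> p x)"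

lemma hb_extend:
  fixes p :: "'a::real_vector \<Rightarrow> real"
  assumes sn: "seminorm p" and M: "hb_good p M" and M0: "(x0, a0) \<in> M"
    and x1: "\<And>a. (x1, a) \<notin> M"
  shows "\<exists>M'. hb_good p M' \<and> M \<subseteq> M' \<and> M' \<noteq> M"
proof -
  have fnc: "a = b" if "(x,a)\<in>M" "(x,b)\<in>M" for x a b using M that unfolding hb_good_def by blast
  have add: "(x+y, a+b)\<in>M" if "(x,a)\<in>M" "(y,b)\<in>M" for x y a b using M that unfolding hb_good_def by blast
  have scl: "(c *\<^sub>R x, c*a)\<in>M" if "(x,a)\<in>M" for x a c using M that unfolding hb_good_def by blast
  have dom: "a \<le> p x" if "(x,a)\<in>M" for x a using M that unfolding hb_good_def by blast
  have zero: "(0, 0) \<in> M" using scl[OF M0, of 0] by simp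
  define S where "S = {a - p (h - x1) | h a. (h,a) \<in> M}"
  have key: "a - p (h - x1) \<le> p (h' + x1) - a'" if "(h,a)\<in>M" "(h',a')\<in>M" for h a h' a'
  proof -
    have "a + a' \<le> p (h + h')" using dom[OF add[OF that]] .
    also have "h + h' = (h - x1) + (h' + x1)" by simp
    also have "p \<dots> \<le> p (h - x1) + p (h' + x1)" by (rule seminorm_add[OF sn])
    finally show ?thesis by simp
  qed
  define c where "c = Sup S"
  have Sne: "S \<noteq> {}" using zero unfolding S_def by blast
  have Sbdd: "bdd_above S" unfolding S_def using key[OF _ zero]
    by (intro bdd_aboveI[of _ "p (0 + x1) - 0"]) auto
  have c1: "a - p (h - x1) \<le> c" if "(h,a)\<in>M" for h a
    unfolding c_def using that Sbdd by (intro cSup_upper) (auto simp: S_def)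
  have c2: "c \<le> p (h' + x1) - a'" if "(h',a')\<in>M" for h' a'
    unfolding c_def using Sne key[OF _ that] by (intro cSup_least) (auto simp: S_def)
  define M' where "M' = {(h + t *\<^sub>R x1, a + t * c) | h a t. (h,a) \<in> M}"
  have inM': "(h + t *\<^sub>R x1, a + t * c) \<in> M'" if "(h,a)\<in>M" for h a t
    using that unfolding M'_def by blast
  have good: "hb_good p M'"
    unfolding hb_good_def
  proof (intro conjI allI impI)
    fix x a b assume "(x,a)\<in>M'" "(x,b)\<in>M'"
    then obtain h1 a1 t1 h2 a2 t2 where 1: "(h1,a1)\<in>M" "x = h1 + t1 *\<^sub>R x1" "a = a1 + t1 * c"
      and 2: "(h2,a2)\<in>M" "x = h2 + t2 *\<^sub>R x1" "b = a2 + t2 * c" unfolding M'_def by blast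
    have d: "(h1 + (-1) *\<^sub>R h2, a1 + (-1) * a2) \<in> M" by (rule add[OF 1(1) scl[OF 2(1)]])
    have tt: "t1 = t2"
    proof (rule ccontr)
      assume ne: "t1 \<noteq> t2"
      have "(inverse (t2 - t1) *\<^sub>R (h1 + (-1) *\<^sub>R h2), inverse (t2 - t1) * (a1 + (-1) * a2)) \<in> M"
        by (rule scl[OF d])
      moreover have "inverse (t2 - t1) *\<^sub>R (h1 + (-1) *\<^sub>R h2) = x1"
      proof -
        have "h1 - h2 = (t2 - t1) *\<^sub>R x1" using 1(2) 2(2) by (simp add: algebra_simps)
        then show ?thesis using ne by simp
      qed
      ultimately show False using x1 by metis
    qed
    then have "h1 = h2" using 1(2) 2(2) by simp
    then show "a = b" using fnc 1 2 tt by auto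
  next
    fix x y a b assume "(x,a)\<in>M'" "(y,b)\<in>M'"
    then obtain h1 a1 t1 h2 a2 t2 where 1: "(h1,a1)\<in>M" "x = h1 + t1 *\<^sub>R x1" "a = a1 + t1 * c"
      and 2: "(h2,a2)\<in>M" "y = h2 + t2 *\<^sub>R x1" "b = a2 + t2 * c" unfolding M'_def by blast
    have "((h1 + h2) + (t1 + t2) *\<^sub>R x1, (a1 + a2) + (t1 + t2) * c) \<in> M'"
      by (rule inM'[OF add[OF 1(1) 2(1)]])
    then show "(x + y, a + b) \<in> M'" using 1 2 by (simp add: algebra_simps)
  next
    fix x a and d :: real assume "(x,a)\<in>M'"
    then obtain h1 a1 t1 where 1: "(h1,a1)\<in>M" "x = h1 + t1 *\<^sub>R x1" "a = a1 + t1 * c"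
      unfolding M'_def by blast
    have "(d *\<^sub>R h1 + (d * t1) *\<^sub>R x1, d * a1 + (d * t1) * c) \<in> M'"
      by (rule inM'[OF scl[OF 1(1)]])
    then show "(d *\<^sub>R x, d * a) \<in> M'" using 1 by (simp add: algebra_simps)
  next
    fix x a assume "(x,a)\<in>M'"
    then obtain h a1 t where 1: "(h,a1)\<in>M" "x = h + t *\<^sub>R x1" "a = a1 + t * c"
      unfolding M'_def by blast
    show "a \<le> p x"
    proof (cases "t = 0")
      case True then show ?thesis using 1 dom by simp
    next
      case False
      have hM: "(inverse t *\<^sub>R h, inverse t * a1) \<in> M" by (rule scl[OF 1(1)])
      show ?thesis
      proof (cases "t > 0")
        case True
        have "c \<le> p (inverse t *\<^sub>R h + x1) - inverse t * a1" by (rule c2[OF hM])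
        then have "t * c \<le> t * p (inverse t *\<^sub>R h + x1) - a1"
          using True by (simp add: field_simps)
        also have "t * p (inverse t *\<^sub>R h + x1) = p (t *\<^sub>R (inverse t *\<^sub>R h + x1))"
          using seminorm_scale[OF sn] True by simp
        also have "t *\<^sub>R (inverse t *\<^sub>R h + x1) = x" using 1(2) True by (simp add: scaleR_add_right)
        finally show ?thesis using 1(3) by simp
      next
        case neg: False
        have hM2: "(inverse (-t) *\<^sub>R h, inverse (-t) * a1) \<in> M" by (rule scl[OF 1(1)])
        have "inverse (-t) * a1 - p (inverse (-t) *\<^sub>R h - x1) \<le> c" by (rule c1[OF hM2])
        then have "a1 - (-t) * p (inverse (-t) *\<^sub>R h - x1) \<le> (-t) * c"
          using neg False by (simp add: field_simps)
        also have "(-t) * p (inverse (-t) *\<^sub>R h - x1) = p ((- t) *\<^sub>R (inverse (-t) *\<^sub>R h - x1))"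
          using seminorm_scale[OF sn, of "-t" "inverse (-t) *\<^sub>R h - x1"] neg False by simp
        also have "(- t) *\<^sub>R (inverse (-t) *\<^sub>R h - x1) = x" using 1(2) False by (simp add: algebra_simps)
        finally show ?thesis using 1(3) by simp
      qed
    qed
  qed
  have sub: "M \<subseteq> M'" using inM'[of _ _ 0] by auto
  have "(x1, c) \<in> M'" using inM'[OF zero, of 1] by simp
  then have "M' \<noteq> M" using x1 by blast
  then show ?thesis using good sub by blast
qed

lemma hb_goodD:
  assumes "hb_good p G"
  shows "(x,a)\<in>G \<Longrightarrow> (x,b)\<in>G \<Longrightarrow> a = b"
    and "(x,a)\<in>G \<Longrightarrow> (y,b)\<in>G \<Longrightarrow> (x+y, a+b)\<in>G"
    and "(x,a)\<in>G \<Longrightarrow> (c *\<^sub>R x, c*a)\<in>G"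
    and "(x,a)\<in>G \<Longrightarrow> a \<le> p x"
  using assms unfolding hb_good_def by blast+

lemma hahn_banach_seminorm:
  fixes p :: "'a::real_vector \<Rightarrow> real"
  assumes sn: "seminorm p"
  shows "\<exists>f. linear f \<and> (\<forall>x. \<bar>f x\<bar> \<le> p x) \<and> f x0 = p x0"
proof -
  define A where "A = {G. hb_good p G \<and> (x0, p x0) \<in> G}"
  define G0 where "G0 = {(c *\<^sub>R x0, c * p x0) | c. True}"
  have G0A: "G0 \<in> A" unfolding A_def hb_good_def
  proof (intro CollectI conjI allI impI)
    fix x a b assume "(x,a) \<in> G0" "(x,b) \<in> G0"
    then obtain c1 c2 where "x = c1 *\<^sub>R x0" "a = c1 * p x0" "x = c2 *\<^sub>R x0" "b = c2 * p x0"
      unfolding G0_def by blast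
    then show "a = b"
    proof (cases "x0 = 0")
      case True then show ?thesis using \<open>a = _\<close> \<open>b = _\<close> seminorm_0[OF sn] by simp
    next
      case False
      have "c1 *\<^sub>R x0 = c2 *\<^sub>R x0" using \<open>x = c1 *\<^sub>R x0\<close> \<open>x = c2 *\<^sub>R x0\<close> by (rule trans[OF sym])
      then have "c1 = c2" using False by simp
      then show ?thesis using \<open>a = _\<close> \<open>b = _\<close> by simp
    qed
  next
    fix x y a b assume "(x,a) \<in> G0" "(y,b) \<in> G0"
    then obtain c1 c2 where "x = c1 *\<^sub>R x0" "a = c1 * p x0" "y = c2 *\<^sub>R x0" "b = c2 * p x0"
      unfolding G0_def by blast
    then show "(x + y, a + b) \<in> G0" unfolding G0_def
      by (auto intro!: exI[of _ "c1 + c2"] simp: algebra_simps)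
  next
    fix x a and c :: real assume "(x,a) \<in> G0"
    then obtain c1 where "x = c1 *\<^sub>R x0" "a = c1 * p x0" unfolding G0_def by blast
    then show "(c *\<^sub>R x, c * a) \<in> G0" unfolding G0_def by (auto intro!: exI[of _ "c * c1"])
  next
    fix x a assume "(x,a) \<in> G0"
    then obtain c1 where "x = c1 *\<^sub>R x0" "a = c1 * p x0" unfolding G0_def by blast
    then show "a \<le> p x" using seminorm_scale[OF sn, of c1 x0] seminorm_nonneg[OF sn, of x0]
      by (simp add: mult_right_mono)
  next
    show "(x0, p x0) \<in> G0" unfolding G0_def by (auto intro!: exI[of _ 1])
  qed
  have "\<exists>M\<in>A. \<forall>X\<in>A. M \<subseteq> X \<longrightarrow> X = M"
  proof (rule Zorn_Lemma2, intro ballI)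
    fix C assume C: "C \<in> chains A"
    show "\<exists>U\<in>A. \<forall>X\<in>C. X \<subseteq> U"
    proof (cases "C = {}")
      case True then show ?thesis using G0A by blast
    next
      case False
      have CA: "C \<subseteq> A" using chainsD2[OF C] .
      have common: "\<exists>G\<in>C. P \<in> G \<and> Q \<in> G" if PQ: "P \<in> \<Union>C" "Q \<in> \<Union>C" for P Q
      proof -
        obtain G1 G2 where "G1 \<in> C" "G2 \<in> C" "P \<in> G1" "Q \<in> G2" using PQ by blast
        then show ?thesis using chainsD[OF C, of G1 G2] by blast
      qed
      have gG: "hb_good p G" if "G \<in> C" for G using CA that unfolding A_def by blast
      have "\<Union>C \<in> A" unfolding A_def
      proof (intro CollectI conjI)
        show "(x0, p x0) \<in> \<Union>C" using False CA unfolding A_def by blast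
        show "hb_good p (\<Union>C)" unfolding hb_good_def
        proof (intro conjI allI impI)
          fix x a b assume "(x,a) \<in> \<Union>C" "(x,b) \<in> \<Union>C"
          then obtain G where "G \<in> C" "(x,a) \<in> G" "(x,b) \<in> G" using common by blast
          then show "a = b" using hb_goodD(1)[OF gG] by blast
        next
          fix x y a b assume "(x,a) \<in> \<Union>C" "(y,b) \<in> \<Union>C"
          then obtain G where "G \<in> C" "(x,a) \<in> G" "(y,b) \<in> G" using common by blast
          then show "(x + y, a + b) \<in> \<Union>C" using hb_goodD(2)[OF gG] by blast
        next
          fix x a and c :: real assume "(x,a) \<in> \<Union>C"
          then obtain G where "G \<in> C" "(x,a) \<in> G" by blast
          then show "(c *\<^sub>R x, c * a) \<in> \<Union>C" using hb_goodD(3)[OF gG] by blast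
        next
          fix x a assume "(x,a) \<in> \<Union>C"
          then obtain G where "G \<in> C" "(x,a) \<in> G" by blast
          then show "a \<le> p x" using hb_goodD(4)[OF gG] by blast
        qed
      qed
      then show ?thesis by blast
    qed
  qed
  then obtain M where MA: "M \<in> A" and Mmax: "\<And>X. X \<in> A \<Longrightarrow> M \<subseteq> X \<Longrightarrow> X = M" by blast
  have Mg: "hb_good p M" and M0: "(x0, p x0) \<in> M" using MA unfolding A_def by auto
  have total: "\<exists>a. (x, a) \<in> M" for x
  proof (rule ccontr)
    assume "\<nexists>a. (x, a) \<in> M"
    then obtain M' where "hb_good p M'" "M \<subseteq> M'" "M' \<noteq> M"
      using hb_extend[OF sn Mg M0, of x] by blast
    moreover have "(x0, p x0) \<in> M'" using M0 \<open>M \<subseteq> M'\<close> by blast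
    ultimately have "M' \<in> A" "M \<subseteq> M'" "M' \<noteq> M" unfolding A_def by auto
    then show False using Mmax by blast
  qed
  have fnc: "a = b" if "(x,a)\<in>M" "(x,b)\<in>M" for x a b using hb_goodD(1)[OF Mg] that by blast
  define f where "f x = (THE a. (x, a) \<in> M)" for x
  have fM: "(x, f x) \<in> M" for x
    unfolding f_def using total[of x] fnc by (metis theI)
  have fe: "f x = a" if "(x, a) \<in> M" for x a using fnc[OF that fM] by simp
  have lin: "linear f"
  proof (rule linearI)
    fix x y show "f (x + y) = f x + f y"
      using hb_goodD(2)[OF Mg fM[of x] fM[of y]] fe by blast
  next
    fix c :: real and x show "f (c *\<^sub>R x) = c *\<^sub>R f x"
      using hb_goodD(3)[OF Mg fM[of x]] fe by simp
  qed
  have le: "f x \<le> p x" for x using hb_goodD(4)[OF Mg fM] by blast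
  have "\<bar>f x\<bar> \<le> p x" for x
  proof -
    have "f (- x) = - f x" using linear_neg[OF lin] .
    then show ?thesis using le[of x] le[of "-x"] seminorm_minus[OF sn, of x] by linarith
  qed
  moreover have "f x0 = p x0" using fe[OF M0] .
  ultimately show ?thesis using lin by blast
qed



lemma tvs_real: "tvs_space TYPE(real)"
  unfolding tvs_space_def
  by (simp add: continuous_on_add continuous_on_mult continuous_on_fst continuous_on_snd continuous_on_id)

lemma linear_cont_from0:
  fixes f :: "'a::{real_vector,t2_space} \<Rightarrow> 'b::{real_vector,t2_space}"
  assumes Ta: "tvs_space TYPE('a)" and Tb: "tvs_space TYPE('b)" and lin: "linear f"
    and nb: "\<And>V. open V \<Longrightarrow> 0 \<in> V \<Longrightarrow> \<exists>U. open U \<and> 0 \<in> U \<and> (\<forall>x\<in>U. f x \<in> V)"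
  shows "continuous_on UNIV f"
proof (rule continuous_at_imp_continuous_on, intro ballI)
  fix y :: 'a
  show "isCont f y"
    unfolding isCont_def tendsto_def
  proof (intro allI impI)
    fix W assume W: "open W" "f y \<in> W"
    have o1: "open {z. z + f y \<in> W}"
      by (rule tvs_open_preimage[OF tvs_add_cont[OF Tb continuous_on_id continuous_on_const] W(1)])
    have o2: "0 \<in> {z. z + f y \<in> W}" using W by simp
    obtain U where U: "open U" "0 \<in> U" "\<forall>x\<in>U. f x \<in> {z. z + f y \<in> W}" using nb[OF o1 o2] by blast
    have "open {x. x - y \<in> U}"
      by (rule tvs_open_preimage[OF tvs_diff_cont[OF Ta continuous_on_id continuous_on_const] U(1)])
    moreover have "y \<in> {x. x - y \<in> U}" using U by simp
    moreover have "f x \<in> W" if "x - y \<in> U" for x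
    proof -
      have "f (x - y) \<in> {z. z + f y \<in> W}" using U(3) that by blast
      then have "f (x - y) + f y \<in> W" by simp
      then show ?thesis using linear_diff[OF lin] by simp
    qed
    ultimately have "\<exists>S. open S \<and> y \<in> S \<and> (\<forall>x\<in>S. x \<noteq> y \<longrightarrow> x \<in> UNIV \<longrightarrow> f x \<in> W)"
      by (intro exI[of _ "{x. x - y \<in> U}"]) simp
    then show "\<forall>\<^sub>F x in at y. f x \<in> W"
      unfolding eventually_at_topological .
  qed
qed

lemma cont_of_seminorm_bound:
  fixes f :: "'a::{real_vector,t2_space} \<Rightarrow> real"
  assumes T: "tvs_space TYPE('a)" and sn: "seminorm p" and pc: "continuous_on UNIV p"
    and lin: "linear f" and bnd: "\<And>x. \<bar>f x\<bar> \<le> C * p x"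
  shows "cont_linear f"
  unfolding cont_linear_def
proof (intro conjI lin linear_cont_from0[OF T tvs_real lin])
  fix V :: "real set" assume V: "open V" "0 \<in> V"
  then obtain e where e: "e > 0" "ball 0 e \<subseteq> V" using open_contains_ball by blast
  define C' where "C' = \<bar>C\<bar> + 1"
  have C': "C' > 0" by (simp add: C'_def)
  have "open {x. p (x - 0) < e / C'}" by (rule seminorm_open_ball[OF T pc])
  moreover have "0 \<in> {x. p (x - 0) < e / C'}" using seminorm_0[OF sn] e C' by simp
  moreover have "f x \<in> V" if "p (x - 0) < e / C'" for x
  proof -
    have "\<bar>f x\<bar> \<le> C' * p x"
    proof -
      have "C * p x \<le> C' * p x" using seminorm_nonneg[OF sn, of x] unfolding C'_def
        by (intro mult_right_mono) auto
      then show ?thesis using bnd[of x] by linarith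
    qed
    also have "\<dots> < e" using that C' by (simp add: pos_less_divide_eq mult.commute)
    finally show ?thesis using e by (auto simp: subset_iff dist_real_def)
  qed
  ultimately show "\<exists>U. open U \<and> 0 \<in> U \<and> (\<forall>x\<in>U. f x \<in> V)" by blast
qed

lemma separating_functional:
  fixes x :: "'a::{real_vector,t2_space}"
  assumes T: "tvs_space TYPE('a)" and LC: "locally_convex_space TYPE('a)" and x: "x \<noteq> 0"
  shows "\<exists>f::'a \<Rightarrow> real. cont_linear f \<and> f x \<noteq> 0"
proof -
  obtain U where U: "open U" "0 \<in> U" "x \<notin> U" using x by (metis separation_t1)
  obtain p where p: "seminorm p" "continuous_on UNIV p" "{y. p y < 1} \<subseteq> U"
    using seminorm_base[OF T LC U(1,2)] by blast
  have px: "p x \<ge> 1" using p(3) U(3) by (meson mem_Collect_eq not_le subsetD)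
  obtain f where f: "linear f" "\<forall>y. \<bar>f y\<bar> \<le> p y" "f x = p x"
    using hahn_banach_seminorm[OF p(1)] by blast
  have "cont_linear f" by (rule cont_of_seminorm_bound[OF T p(1,2) f(1), of 1]) (use f(2) in simp)
  moreover have "f x \<noteq> 0" using f(3) px by simp
  ultimately show ?thesis by blast
qed

lemma tvs_bounded_iff:
  fixes B :: "'a::{real_vector,t2_space} set"
  assumes T: "tvs_space TYPE('a)" and LC: "locally_convex_space TYPE('a)"
  shows "tvs_bounded B \<longleftrightarrow>
    (\<forall>p. seminorm p \<and> continuous_on UNIV p \<longrightarrow> (\<exists>K. \<forall>b\<in>B. p b \<le> K))"
proof
  assume bd: "tvs_bounded B"
  show "\<forall>p. seminorm p \<and> continuous_on UNIV p \<longrightarrow> (\<exists>K. \<forall>b\<in>B. p b \<le> K)"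
  proof (intro allI impI)
    fix p :: "'a \<Rightarrow> real" assume p: "seminorm p \<and> continuous_on UNIV p"
    have o1: "open {x. p (x - 0) < 1}" by (rule seminorm_open_ball[OF T]) (use p in simp)
    have o2: "0 \<in> {x. p (x - 0) < 1}" using seminorm_0[of p] p by simp
    obtain s where s: "s > 0" "\<forall>t. t > s \<longrightarrow> B \<subseteq> (\<lambda>x. t *\<^sub>R x) ` {x. p (x - 0) < 1}"
      using bd[unfolded tvs_bounded_def, rule_format, OF conjI[OF o1 o2]] by blast
    have "p b \<le> s + 1" if bB: "b \<in> B" for b
    proof -
      obtain u where u: "b = (s + 1) *\<^sub>R u" "p u < 1" using s(2)[rule_format, of "s+1"] bB by auto
      have "p b = (s + 1) * p u" using u(1) seminorm_scale[of p "s+1" u] p s by simp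
      also have "\<dots> \<le> (s + 1) * 1" using u(2) s by (intro mult_left_mono) auto
      finally show ?thesis by simp
    qed
    then show "\<exists>K. \<forall>b\<in>B. p b \<le> K" by blast
  qed
next
  assume H: "\<forall>p. seminorm p \<and> continuous_on UNIV p \<longrightarrow> (\<exists>K. \<forall>b\<in>B. p b \<le> K)"
  show "tvs_bounded B" unfolding tvs_bounded_def
  proof (intro allI impI)
    fix U :: "'a set" assume U: "open U \<and> 0 \<in> U"
    then obtain p where p: "seminorm p" "continuous_on UNIV p" "{y. p y < 1} \<subseteq> U"
      using seminorm_base[OF T LC] by blast
    obtain K where K: "\<forall>b\<in>B. p b \<le> K" using H p by blast
    define s where "s = \<bar>K\<bar> + 1"
    have "B \<subseteq> (\<lambda>x. t *\<^sub>R x) ` U" if t: "t > s" for t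
    proof
      fix b assume b: "b \<in> B"
      have tpos: "t > 0" using t abs_ge_zero[of K] unfolding s_def by linarith
      have "p (inverse t *\<^sub>R b) = inverse t * p b" using seminorm_scale[OF p(1)] tpos by simp
      also have "\<dots> < 1"
      proof -
        have "p b < t" using K b t abs_ge_self[of K] unfolding s_def by fastforce
        then show ?thesis using tpos by (simp add: field_simps)
      qed
      finally have "inverse t *\<^sub>R b \<in> U" using p(3) by blast
      moreover have "b = t *\<^sub>R (inverse t *\<^sub>R b)" using tpos by simp
      ultimately show "b \<in> (\<lambda>x. t *\<^sub>R x) ` U" by (rule rev_image_eqI)
    qed
    moreover have "s > 0" unfolding s_def by simp
    ultimately show "\<exists>s>0. \<forall>t. t > s \<longrightarrow> B \<subseteq> (\<lambda>x. t *\<^sub>R x) ` U"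
      by blast
  qed
qed



locale dualsp =
  fixes p :: "'a::real_vector \<Rightarrow> real"
  assumes sn: "seminorm p"
begin

definition X where "X = {f::'a\<Rightarrow>real. linear f \<and> (\<exists>C. \<forall>x. \<bar>f x\<bar> \<le> C * p x)}"
definition N :: "('a \<Rightarrow> real) \<Rightarrow> real" where "N h = Sup {\<bar>h x\<bar> | x. p x \<le> 1}"
definition d where "d f g = (if f \<in> X \<and> g \<in> X then N (\<lambda>x. f x - g x) else 0)"

lemma pnn: "0 \<le> p x" by (rule seminorm_nonneg[OF sn])

lemma X_diff: "f \<in> X \<Longrightarrow> g \<in> X \<Longrightarrow> (\<lambda>x. f x - g x) \<in> X"
proof -
  assume f: "f \<in> X" and g: "g \<in> X"
  then obtain C1 C2 where C1: "\<forall>x. \<bar>f x\<bar> \<le> C1 * p x" and C2: "\<forall>x. \<bar>g x\<bar> \<le> C2 * p x"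
    and l: "linear f" "linear g" unfolding X_def by blast
  have "\<bar>f x - g x\<bar> \<le> (C1 + C2) * p x" for x using C1 C2 by (smt (verit) distrib_right)
  moreover have "linear (\<lambda>x. f x - g x)" using l by (rule linear_compose_sub)
  ultimately show ?thesis unfolding X_def by blast
qed

lemma X_add_scale: "f \<in> X \<Longrightarrow> g \<in> X \<Longrightarrow> (\<lambda>x. f x + c * g x) \<in> X"
proof -
  assume f: "f \<in> X" and g: "g \<in> X"
  then obtain C1 C2 where C1: "\<forall>x. \<bar>f x\<bar> \<le> C1 * p x" and C2: "\<forall>x. \<bar>g x\<bar> \<le> C2 * p x"
    and l: "linear f" "linear g" unfolding X_def by blast
  have "\<bar>f x + c * g x\<bar> \<le> (C1 + \<bar>c\<bar> * C2) * p x" for x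
  proof -
    have "\<bar>c * g x\<bar> \<le> \<bar>c\<bar> * (C2 * p x)" using C2 by (simp add: abs_mult mult_left_mono)
    then show ?thesis using C1[rule_format, of x] by (simp add: algebra_simps)
  qed
  moreover have "linear (\<lambda>x. f x + c * g x)"
  proof (rule linearI)
    fix x y show "f (x + y) + c * g (x + y) = (f x + c * g x) + (f y + c * g y)"
      using linear_add[OF l(1)] linear_add[OF l(2)] by (simp add: algebra_simps)
  next
    fix r :: real and x show "f (r *\<^sub>R x) + c * g (r *\<^sub>R x) = r *\<^sub>R (f x + c * g x)"
      using linear_scale[OF l(1)] linear_scale[OF l(2)] by (simp add: algebra_simps)
  qed
  ultimately show ?thesis unfolding X_def by blast
qed

lemma zero_X: "(\<lambda>x. 0) \<in> X" unfolding X_def by (auto intro: exI[of _ 0] linear_zero)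

lemma N_set_bdd: "h \<in> X \<Longrightarrow> bdd_above {\<bar>h x\<bar> | x. p x \<le> 1}"
proof -
  assume "h \<in> X"
  then obtain C where C: "\<forall>x. \<bar>h x\<bar> \<le> C * p x" unfolding X_def by blast
  have "\<bar>h x\<bar> \<le> \<bar>C\<bar>" if "p x \<le> 1" for x
  proof -
    have "C * p x \<le> \<bar>C\<bar> * 1" using that pnn[of x]
      by (meson abs_ge_self abs_ge_zero mult_mono order_trans)
    then show ?thesis using C[rule_format, of x] by simp
  qed
  then show ?thesis by (intro bdd_aboveI[of _ "\<bar>C\<bar>"]) blast
qed

lemma N_ge: "h \<in> X \<Longrightarrow> p x \<le> 1 \<Longrightarrow> \<bar>h x\<bar> \<le> N h"
  unfolding N_def by (rule cSup_upper) (auto dest: N_set_bdd)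

lemma N_le: "(\<And>x. p x \<le> 1 \<Longrightarrow> \<bar>h x\<bar> \<le> B) \<Longrightarrow> N h \<le> B"
proof -
  assume H: "\<And>x. p x \<le> 1 \<Longrightarrow> \<bar>h x\<bar> \<le> B"
  have "p 0 \<le> 1" using seminorm_0[OF sn] by simp
  then have ne: "{\<bar>h x\<bar> | x. p x \<le> 1} \<noteq> {}" by blast
  show ?thesis unfolding N_def by (rule cSup_least[OF ne]) (use H in auto)
qed

lemma N_nonneg: "h \<in> X \<Longrightarrow> 0 \<le> N h"
  using N_ge[of h 0] seminorm_0[OF sn] by simp

lemma N_bound: "h \<in> X \<Longrightarrow> \<bar>h x\<bar> \<le> N h * p x"
proof -
  assume hX: "h \<in> X"
  then obtain C where C: "\<forall>x. \<bar>h x\<bar> \<le> C * p x" and l: "linear h" unfolding X_def by blast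
  show ?thesis
  proof (cases "p x = 0")
    case True then show ?thesis using C by (metis mult_zero_right)
  next
    case False
    then have pos: "p x > 0" using pnn[of x] by simp
    have "p (inverse (p x) *\<^sub>R x) = 1" using seminorm_scale[OF sn] pos by simp
    then have "\<bar>h (inverse (p x) *\<^sub>R x)\<bar> \<le> N h" using N_ge[OF hX] by simp
    moreover have "h (inverse (p x) *\<^sub>R x) = inverse (p x) * h x" using linear_scale[OF l] by simp
    ultimately have "\<bar>h x\<bar> / p x \<le> N h" using pos by (simp add: abs_mult divide_inverse mult.commute)
    then show ?thesis using pos by (simp add: divide_le_eq)
  qed
qed

lemma metric: "Metric_space X d"
proof
  fix f g show "0 \<le> d f g" unfolding d_def using N_nonneg X_diff by auto
next
  fix f g show "d f g = d g f"
  proof -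
    have "{\<bar>f x - g x\<bar> | x. p x \<le> 1} = {\<bar>g x - f x\<bar> | x. p x \<le> 1}" by (simp add: abs_minus_commute)
    then show ?thesis unfolding d_def N_def by auto
  qed
next
  fix f g assume f: "f \<in> X" and g: "g \<in> X"
  show "d f g = 0 \<longleftrightarrow> f = g"
  proof
    assume "d f g = 0"
    then have "N (\<lambda>x. f x - g x) = 0" using f g by (simp add: d_def)
    then have "\<bar>f x - g x\<bar> \<le> 0" for x using N_bound[OF X_diff[OF f g], of x] by simp
    then show "f = g" by (intro ext) simp
  next
    assume "f = g"
    then have "N (\<lambda>x. f x - g x) \<le> 0" by (intro N_le) simp
    then show "d f g = 0" using N_nonneg[OF X_diff[OF f g]] f g by (simp add: d_def)
  qed
next
  fix f g h assume f: "f \<in> X" and g: "g \<in> X" and h: "h \<in> X"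
  have "N (\<lambda>x. f x - h x) \<le> N (\<lambda>x. f x - g x) + N (\<lambda>x. g x - h x)"
  proof (rule N_le)
    fix x assume "p x \<le> 1"
    then have "\<bar>f x - g x\<bar> \<le> N (\<lambda>x. f x - g x)" "\<bar>g x - h x\<bar> \<le> N (\<lambda>x. g x - h x)"
      using N_ge[OF X_diff[OF f g]] N_ge[OF X_diff[OF g h]] by auto
    then show "\<bar>f x - h x\<bar> \<le> N (\<lambda>x. f x - g x) + N (\<lambda>x. g x - h x)" by linarith
  qed
  then show "d f h \<le> d f g + d g h" using f g h by (simp add: d_def)
qed


lemma complete: "Metric_space.mcomplete X d"
proof -
  interpret Mx: Metric_space X d by (rule metric)
  show ?thesis unfolding Mx.mcomplete_def
  proof (intro allI impI)
    fix \<sigma> assume C: "Mx.MCauchy \<sigma>"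
    have sX: "\<sigma> n \<in> X" for n using C unfolding Mx.MCauchy_def by auto
    have cau: "\<forall>\<epsilon>>0. \<exists>N. \<forall>n n'. N \<le> n \<longrightarrow> N \<le> n' \<longrightarrow> d (\<sigma> n) (\<sigma> n') < \<epsilon>"
      using C unfolding Mx.MCauchy_def by auto
    have dd: "\<And>n m x. \<bar>\<sigma> n x - \<sigma> m x\<bar> \<le> d (\<sigma> n) (\<sigma> m) * p x"
      subgoal for n m x using N_bound[OF X_diff[OF sX[of n] sX[of m]], of x] sX by (simp add: d_def)
      done
    have pc: "Cauchy (\<lambda>n. \<sigma> n x)" for x
    proof (rule metric_CauchyI)
      fix e :: real assume e: "e > 0"
      have e': "e / (p x + 1) > 0" using e pnn[of x] by simp
      obtain M where M: "\<forall>n n'. M \<le> n \<longrightarrow> M \<le> n' \<longrightarrow> d (\<sigma> n) (\<sigma> n') < e / (p x + 1)"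
        using cau e' by blast
      show "\<exists>M. \<forall>m\<ge>M. \<forall>n\<ge>M. dist (\<sigma> m x) (\<sigma> n x) < e"
      proof (intro exI allI impI)
        fix m n assume mn: "M \<le> m" "M \<le> n"
        have "\<bar>\<sigma> m x - \<sigma> n x\<bar> \<le> d (\<sigma> m) (\<sigma> n) * p x" by (rule dd)
        also have "\<dots> \<le> e / (p x + 1) * p x"
          using M mn pnn[of x] by (intro mult_right_mono) (auto simp: less_imp_le)
        also have "\<dots> < e"
        proof -
          have "e / (p x + 1) * p x < e / (p x + 1) * (p x + 1)"
            using e' by (intro mult_strict_left_mono) auto
          moreover have "e / (p x + 1) * (p x + 1) = e" using pnn[of x] by (simp add: field_simps)
          ultimately show ?thesis by simp
        qed
        finally show "dist (\<sigma> m x) (\<sigma> n x) < e" by (simp add: dist_real_def)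
      qed
    qed
    define f where "f x = lim (\<lambda>n. \<sigma> n x)" for x
    have lim: "(\<lambda>n. \<sigma> n x) \<longlonglongrightarrow> f x" for x
      using pc[of x] unfolding f_def by (simp add: Cauchy_convergent_iff convergent_LIMSEQ_iff)
    have lin: "linear f"
    proof (rule linearI)
      fix x y
      have "(\<lambda>n. \<sigma> n x + \<sigma> n y) \<longlonglongrightarrow> f x + f y" by (intro tendsto_add lim)
      moreover have "(\<lambda>n. \<sigma> n (x + y)) = (\<lambda>n. \<sigma> n x + \<sigma> n y)"
        using sX unfolding X_def by (auto simp: linear_add)
      ultimately show "f (x + y) = f x + f y" using lim[of "x + y"] LIMSEQ_unique by metis
    next
      fix c :: real and x
      have "(\<lambda>n. c * \<sigma> n x) \<longlonglongrightarrow> c * f x" by (intro tendsto_mult tendsto_const lim)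
      moreover have "(\<lambda>n. \<sigma> n (c *\<^sub>R x)) = (\<lambda>n. c * \<sigma> n x)"
        using sX unfolding X_def by (auto simp: linear_scale)
      ultimately show "f (c *\<^sub>R x) = c *\<^sub>R f x" using lim[of "c *\<^sub>R x"] LIMSEQ_unique by (metis real_scaleR_def)
    qed
    obtain N0 where N0: "\<forall>n n'. N0 \<le> n \<longrightarrow> N0 \<le> n' \<longrightarrow> d (\<sigma> n) (\<sigma> n') < 1"
      using cau by (meson zero_less_one)
    have fb: "\<bar>f x\<bar> \<le> (N (\<sigma> N0) + 1) * p x" for x
    proof (rule LIMSEQ_le_const2[OF tendsto_rabs[OF lim[of x]]], intro exI allI impI)
      fix n assume n: "N0 \<le> n"
      have "\<bar>\<sigma> n x\<bar> \<le> \<bar>\<sigma> N0 x\<bar> + \<bar>\<sigma> n x - \<sigma> N0 x\<bar>" by linarith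
      also have "\<dots> \<le> N (\<sigma> N0) * p x + d (\<sigma> n) (\<sigma> N0) * p x"
      proof -
        have "\<bar>\<sigma> n x - \<sigma> N0 x\<bar> \<le> d (\<sigma> n) (\<sigma> N0) * p x" by (rule dd)
        then show ?thesis using N_bound[OF sX, of N0 x] by linarith
      qed
      also have "\<dots> \<le> N (\<sigma> N0) * p x + 1 * p x"
        using N0 n pnn[of x] by (intro add_left_mono mult_right_mono) (auto simp: less_imp_le)
      finally show "\<bar>\<sigma> n x\<bar> \<le> (N (\<sigma> N0) + 1) * p x" by (simp add: algebra_simps)
    qed
    have fX: "f \<in> X" unfolding X_def using lin fb by blast
    have "limitin Mx.mtopology \<sigma> f sequentially"
      unfolding Mx.limitin_metric
    proof (intro conjI fX allI impI)
      fix \<epsilon> :: real assume \<epsilon>: "\<epsilon> > 0"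
      obtain N1 where N1: "\<forall>n n'. N1 \<le> n \<longrightarrow> N1 \<le> n' \<longrightarrow> d (\<sigma> n) (\<sigma> n') < \<epsilon> / 2"
        using cau \<epsilon> by (meson half_gt_zero)
      have "\<sigma> n \<in> X \<and> d (\<sigma> n) f < \<epsilon>" if n: "N1 \<le> n" for n
      proof -
        have "N (\<lambda>x. \<sigma> n x - f x) \<le> \<epsilon> / 2"
        proof (rule N_le)
          fix x assume px: "p x \<le> 1"
          have "(\<lambda>m. \<bar>\<sigma> n x - \<sigma> m x\<bar>) \<longlonglongrightarrow> \<bar>\<sigma> n x - f x\<bar>"
            by (intro tendsto_rabs tendsto_diff tendsto_const lim)
          then show "\<bar>\<sigma> n x - f x\<bar> \<le> \<epsilon> / 2"
          proof (rule LIMSEQ_le_const2, intro exI allI impI)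
            fix m assume m: "N1 \<le> m"
            have "\<bar>\<sigma> n x - \<sigma> m x\<bar> \<le> d (\<sigma> n) (\<sigma> m) * p x" by (rule dd)
            also have "\<dots> \<le> (\<epsilon> / 2) * 1"
              using N1 n m pnn[of x] px \<epsilon> by (intro mult_mono) (auto simp: less_imp_le)
            finally show "\<bar>\<sigma> n x - \<sigma> m x\<bar> \<le> \<epsilon> / 2" by simp
          qed
        qed
        then show ?thesis using sX fX \<epsilon> by (simp add: d_def)
      qed
      then show "\<forall>\<^sub>F n in sequentially. \<sigma> n \<in> X \<and> d (\<sigma> n) f < \<epsilon>"
        unfolding eventually_sequentially by blast
    qed
    then show "\<exists>x. limitin Mx.mtopology \<sigma> x sequentially" by blast
  qed
qed

end



lemma mackey:
  fixes A :: "'a::{real_vector,t2_space} set" and p :: "'a \<Rightarrow> real"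
  assumes T: "tvs_space TYPE('a)" and sn: "seminorm p" and pc: "continuous_on UNIV p"
    and wb: "\<And>f::'a\<Rightarrow>real. cont_linear f \<Longrightarrow> \<exists>C. \<forall>a\<in>A. \<bar>f a\<bar> \<le> C"
  shows "\<exists>K. \<forall>a\<in>A. p a \<le> K"
proof -
  interpret D: dualsp p using sn by (simp add: dualsp_def)
  interpret Mx: Metric_space D.X D.d by (rule D.metric)
  define Xn where "Xn n = {f \<in> D.X. \<forall>a\<in>A. \<bar>f a\<bar> \<le> real n}" for n :: nat
  have XcX: "cont_linear f" if fX: "f \<in> D.X" for f
  proof -
    obtain C where "linear f" "\<forall>x. \<bar>f x\<bar> \<le> C * p x" using fX unfolding D.X_def by blast
    then show ?thesis using cont_of_seminorm_bound[OF T sn pc, of f C] by blast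
  qed
  have union: "\<Union>(range Xn) = D.X"
  proof
    show "\<Union>(range Xn) \<subseteq> D.X" unfolding Xn_def by blast
  next
    show "D.X \<subseteq> \<Union>(range Xn)"
    proof
      fix f assume f: "f \<in> D.X"
      obtain C where C: "\<forall>a\<in>A. \<bar>f a\<bar> \<le> C" using wb[OF XcX[OF f]] by blast
      have "f \<in> Xn (nat \<lceil>C\<rceil>)" unfolding Xn_def using f C real_nat_ceiling_ge[of C]
        by (auto intro: order_trans)
      then show "f \<in> \<Union>(range Xn)" by blast
    qed
  qed
  have closed: "closedin Mx.mtopology (Xn n)" for n
    unfolding closedin_def Mx.topspace_mtopology Mx.openin_mtopology
  proof (intro conjI allI impI)
    show "Xn n \<subseteq> D.X" unfolding Xn_def by blast
    show "D.X - Xn n \<subseteq> D.X" by blast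
    fix g assume g: "g \<in> D.X - Xn n"
    then obtain a where a: "a \<in> A" "\<bar>g a\<bar> > real n" unfolding Xn_def by force
    define r where "r = (\<bar>g a\<bar> - real n) / (p a + 1)"
    have pa: "p a \<ge> 0" by (rule seminorm_nonneg[OF sn])
    have r: "r > 0" unfolding r_def using a pa by simp
    have "Mx.mball g r \<subseteq> D.X - Xn n"
    proof
      fix h assume h: "h \<in> Mx.mball g r"
      then have gX: "g \<in> D.X" and hX: "h \<in> D.X" and dgh: "D.d g h < r" by auto
      have "\<bar>g a - h a\<bar> \<le> D.d g h * p a"
        using D.N_bound[OF D.X_diff[OF gX hX], of a] gX hX by (simp add: D.d_def)
      also have "\<dots> \<le> r * p a" using dgh pa by (intro mult_right_mono) auto
      also have "\<dots> < r * (p a + 1)" using r by simp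
      also have "\<dots> = \<bar>g a\<bar> - real n" unfolding r_def using pa by simp
      finally have "\<bar>h a\<bar> > real n" by linarith
      then show "h \<in> D.X - Xn n" using hX a(1) unfolding Xn_def by force
    qed
    then show "\<exists>r>0. Mx.mball g r \<subseteq> D.X - Xn n" using r by blast
  qed
  have "\<exists>n. Mx.mtopology interior_of (Xn n) \<noteq> {}"
  proof (rule ccontr)
    assume H: "\<nexists>n. Mx.mtopology interior_of Xn n \<noteq> {}"
    have "Mx.mtopology interior_of \<Union>(range Xn) = {}"
    proof (rule Mx.metric_Baire_category_alt[OF D.complete])
      show "countable (range Xn)" by simp
      fix T assume "T \<in> range Xn"
      then obtain n where "T = Xn n" by blast
      then show "closedin Mx.mtopology T \<and> Mx.mtopology interior_of T = {}" using closed H by blast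
    qed
    then have "D.X = {}" using union Mx.topspace_mtopology interior_of_topspace by metis
    then show False using D.zero_X by blast
  qed
  then obtain n f0 where "f0 \<in> Mx.mtopology interior_of (Xn n)" by blast
  then obtain \<epsilon> where f0X: "f0 \<in> D.X" and \<epsilon>: "\<epsilon> > 0" and ball: "Mx.mball f0 \<epsilon> \<subseteq> Xn n"
    using Mx.in_interior_of_mball by blast
  have f0n: "f0 \<in> Xn n" using ball f0X \<epsilon> by (auto simp: subset_iff)
  have "p a \<le> 4 * real n / \<epsilon>" if a: "a \<in> A" for a
  proof (cases "p a = 0")
    case True then show ?thesis using \<epsilon> by simp
  next
    case False
    obtain g where g: "linear g" "\<forall>x. \<bar>g x\<bar> \<le> p x" "g a = p a"
      using hahn_banach_seminorm[OF sn] by blast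
    have gX: "g \<in> D.X" unfolding D.X_def using g by (auto intro!: exI[of _ 1])
    define h where "h = (\<lambda>x. f0 x + (\<epsilon>/2) * g x)"
    have hX: "h \<in> D.X" unfolding h_def by (rule D.X_add_scale[OF f0X gX])
    have "D.N (\<lambda>x. f0 x - h x) \<le> \<epsilon>/2"
    proof (rule D.N_le)
      fix x assume px: "p x \<le> 1"
      have "\<bar>f0 x - h x\<bar> = (\<epsilon>/2) * \<bar>g x\<bar>" unfolding h_def using \<epsilon> by (simp add: abs_mult)
      also have "\<dots> \<le> (\<epsilon>/2) * 1" using g(2) px \<epsilon> by (intro mult_left_mono) (auto intro: order_trans)
      finally show "\<bar>f0 x - h x\<bar> \<le> \<epsilon>/2" by simp
    qed
    then have "D.d f0 h < \<epsilon>" using f0X hX \<epsilon> by (simp add: D.d_def)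
    then have "h \<in> Xn n" using ball f0X hX by (auto simp: subset_iff)
    then have "\<bar>f0 a + (\<epsilon>/2) * p a\<bar> \<le> real n" using a g(3) unfolding Xn_def h_def by auto
    moreover have "\<bar>f0 a\<bar> \<le> real n" using f0n a unfolding Xn_def by auto
    ultimately have "(\<epsilon>/2) * p a \<le> 2 * real n" by linarith
    then show ?thesis using \<epsilon> by (simp add: field_simps)
  qed
  then show ?thesis by blast
qed

lemma weakly_bounded_imp_bounded:
  fixes A :: "'a::{real_vector,t2_space} set"
  assumes T: "tvs_space TYPE('a)" and LC: "locally_convex_space TYPE('a)"
    and wb: "\<And>f::'a\<Rightarrow>real. cont_linear f \<Longrightarrow> \<exists>C. \<forall>a\<in>A. \<bar>f a\<bar> \<le> C"
  shows "tvs_bounded A"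
  unfolding tvs_bounded_iff[OF T LC] using mackey[OF T _ _ wb] by blast



lemma quot_weakly_bounded:
  fixes F :: "real \<Rightarrow> 'f::{real_vector,t2_space}" and f :: "'f \<Rightarrow> real"
  assumes S: "compact S" "t0 \<in> S" and cont: "continuous_on S F"
    and fc: "cont_linear f" and der: "((\<lambda>t. f (F t)) has_real_derivative d) (at t0 within S)"
  shows "\<exists>C. \<forall>a\<in>{(1 / (t - t0)) *\<^sub>R (F t - F t0) | t. t \<in> S \<and> t \<noteq> t0}. \<bar>f a\<bar> \<le> C"
proof -
  define g where "g t = f (F t)" for t
  have lin: "linear f" and fcont: "continuous_on UNIV f" using fc unfolding cont_linear_def by auto
  have gc: "continuous_on S g" unfolding g_def
    by (rule continuous_on_compose2[OF fcont cont]) auto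
  have "compact (g ` S)" by (rule compact_continuous_image[OF gc S(1)])
  then obtain M where M: "\<forall>y\<in>g ` S. \<bar>y\<bar> \<le> M" using compact_imp_bounded bounded_real by metis
  have "((\<lambda>y. (g y - g t0) / (y - t0)) \<longlongrightarrow> d) (at t0 within S)"
    using der unfolding g_def has_field_derivative_iff .
  then have "\<forall>\<^sub>F y in at t0 within S. dist ((g y - g t0) / (y - t0)) d < 1"
    by (rule tendstoD) simp
  then obtain \<delta> where \<delta>: "\<delta> > 0" "\<forall>y\<in>S. y \<noteq> t0 \<and> dist y t0 < \<delta> \<longrightarrow> dist ((g y - g t0) / (y - t0)) d < 1"
    unfolding eventually_at by blast
  have qf: "f ((1 / (t - t0)) *\<^sub>R (F t - F t0)) = (g t - g t0) / (t - t0)" for t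
    using linear_scale[OF lin] linear_diff[OF lin] unfolding g_def by simp
  have "\<bar>(g t - g t0) / (t - t0)\<bar> \<le> \<bar>d\<bar> + 1 + 2 * M / \<delta>" if t: "t \<in> S" "t \<noteq> t0" for t
  proof (cases "dist t t0 < \<delta>")
    case True
    then have "dist ((g t - g t0) / (t - t0)) d < 1" using \<delta> t by blast
    then have h1: "\<bar>(g t - g t0) / (t - t0) - d\<bar> < 1" by (simp add: dist_real_def)
    have h2: "\<bar>(g t - g t0) / (t - t0)\<bar> \<le> \<bar>(g t - g t0) / (t - t0) - d\<bar> + \<bar>d\<bar>"
      using abs_triangle_ineq[of "(g t - g t0) / (t - t0) - d" d] by simp
    have "M \<ge> 0" using M S(2) by force
    then have h3: "2 * M / \<delta> \<ge> 0" using \<delta> by simp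
    show ?thesis using h1 h2 h3 by linarith
  next
    case False
    then have tt: "\<bar>t - t0\<bar> \<ge> \<delta>" by (simp add: dist_real_def)
    have "\<bar>g t\<bar> \<le> M" "\<bar>g t0\<bar> \<le> M" using M t(1) S(2) by auto
    then have gb: "\<bar>g t - g t0\<bar> \<le> 2 * M" by linarith
    have "\<bar>(g t - g t0) / (t - t0)\<bar> = \<bar>g t - g t0\<bar> / \<bar>t - t0\<bar>" by (simp add: abs_divide)
    also have "\<dots> \<le> 2 * M / \<bar>t - t0\<bar>" using gb by (intro divide_right_mono) auto
    also have "\<dots> \<le> 2 * M / \<delta>" using tt \<delta> gb by (intro divide_left_mono) auto
    finally show ?thesis by linarith
  qed
  then show ?thesis using qf by fastforce
qed

lemma part_i:
  fixes F :: "real \<Rightarrow> 'f::{real_vector,t2_space}"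
  assumes Mo: "montel_space TYPE('f)" and S: "compact S" "t0 \<in> S" and nb: "at t0 within S \<noteq> bot"
    and cont: "continuous_on S F"
    and der: "\<forall>f'::'f \<Rightarrow> real. cont_linear f' \<longrightarrow>
           (\<exists>d. ((\<lambda>t. f' (F t)) has_real_derivative d) (at t0 within S))"
  shows "\<exists>D::'f.
           ((\<lambda>t. (1 / (t - t0)) *\<^sub>R (F t - F t0)) \<longlongrightarrow> D) (at t0 within S) \<and>
           (\<forall>f'::'f \<Rightarrow> real. cont_linear f' \<longrightarrow>
              ((\<lambda>t. f' (F t)) has_real_derivative f' D) (at t0 within S))"
proof -
  have T: "tvs_space TYPE('f)" and LC: "locally_convex_space TYPE('f)"
    and MB: "\<And>B::'f set. tvs_bounded B \<Longrightarrow> closed B \<Longrightarrow> compact B"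
    using Mo unfolding montel_space_def by auto
  define q where "q t = (1 / (t - t0)) *\<^sub>R (F t - F t0)" for t
  define A where "A = {q t | t. t \<in> S \<and> t \<noteq> t0}"
  define Fq where "Fq = at t0 within S"
  have Abd: "tvs_bounded A"
  proof (rule weakly_bounded_imp_bounded[OF T LC])
    fix f :: "'f \<Rightarrow> real" assume fc: "cont_linear f"
    obtain d where "((\<lambda>t. f (F t)) has_real_derivative d) (at t0 within S)" using der fc by blast
    then show "\<exists>C. \<forall>a\<in>A. \<bar>f a\<bar> \<le> C"
      using quot_weakly_bounded[OF S cont fc] unfolding A_def q_def by blast
  qed
  define K where "K = closure A"
  have Kbd: "tvs_bounded K" unfolding tvs_bounded_iff[OF T LC]
  proof (intro allI impI)
    fix p :: "'f \<Rightarrow> real" assume p: "seminorm p \<and> continuous_on UNIV p"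
    obtain B where B: "\<forall>b\<in>A. p b \<le> B" using Abd p unfolding tvs_bounded_iff[OF T LC] by blast
    have "closed {x. p x \<le> B}" by (rule closed_Collect_le) (use p in auto)
    moreover have "A \<subseteq> {x. p x \<le> B}" using B by auto
    ultimately have "K \<subseteq> {x. p x \<le> B}" unfolding K_def by (rule closure_minimal[rotated])
    then show "\<exists>B. \<forall>b\<in>K. p b \<le> B" by blast
  qed
  have Kc: "compact K" using MB[OF Kbd] unfolding K_def by simp
  have evK: "eventually (\<lambda>t. q t \<in> K) Fq"
    unfolding Fq_def eventually_at_filter
    by (rule always_eventually) (auto simp: A_def K_def intro: closure_subset[THEN subsetD])
  have quot: "f (q t) = (f (F t) - f (F t0)) / (t - t0)" if fc: "cont_linear f" for t and f :: "'f \<Rightarrow> real"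
  proof -
    have lin: "linear f" using fc unfolding cont_linear_def by auto
    show ?thesis unfolding q_def using linear_scale[OF lin] linear_diff[OF lin] by simp
  qed
  have cluster: "f D' = d"
    if G: "inf (nhds D') (filtermap q Fq) \<noteq> bot" and fc: "cont_linear f"
      and dd: "((\<lambda>t. f (F t)) has_real_derivative d) (at t0 within S)" for D' f d
  proof -
    have fcont: "continuous_on UNIV f" using fc unfolding cont_linear_def by auto
    have "(f \<longlongrightarrow> f D') (nhds D')"
      using fcont by (simp add: continuous_on_eq_continuous_at isCont_def tendsto_at_iff_tendsto_nhds[symmetric])
    then have l1: "(f \<longlongrightarrow> f D') (inf (nhds D') (filtermap q Fq))" by (rule tendsto_mono[rotated]) simp
    have "((\<lambda>t. (f (F t) - f (F t0)) / (t - t0)) \<longlongrightarrow> d) Fq"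
      using dd unfolding has_field_derivative_iff Fq_def .
    then have "((\<lambda>t. f (q t)) \<longlongrightarrow> d) Fq" using quot[OF fc] by simp
    then have "(f \<longlongrightarrow> d) (filtermap q Fq)" by (simp add: filterlim_filtermap)
    then have l2: "(f \<longlongrightarrow> d) (inf (nhds D') (filtermap q Fq))" by (rule tendsto_mono[rotated]) simp
    show ?thesis using tendsto_unique[OF G l1 l2] .
  qed
  have Fqnb: "filtermap q Fq \<noteq> bot" using nb unfolding Fq_def by (simp add: filtermap_bot_iff)
  obtain D where DK: "D \<in> K" and DG: "inf (nhds D) (filtermap q Fq) \<noteq> bot"
    using Kc[unfolded compact_filter, rule_format, OF Fqnb] evK by (auto simp: eventually_filtermap)
  have lim: "(q \<longlongrightarrow> D) Fq"
    unfolding tendsto_def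
  proof (intro allI impI)
    fix W assume W: "open W" "D \<in> W"
    show "eventually (\<lambda>t. q t \<in> W) Fq"
    proof (rule ccontr)
      assume ne: "\<not> eventually (\<lambda>t. q t \<in> W) Fq"
      define F2 where "F2 = inf (filtermap q Fq) (principal (- W))"
      have F2nb: "F2 \<noteq> bot"
        using ne unfolding F2_def trivial_limit_def eventually_inf_principal eventually_filtermap by simp
      have evK2: "eventually (\<lambda>x. x \<in> K) F2"
        unfolding F2_def eventually_inf_principal eventually_filtermap using evK by (auto elim: eventually_mono)
      obtain D' where D'K: "D' \<in> K" and D'G: "inf (nhds D') F2 \<noteq> bot"
        using Kc[unfolded compact_filter, rule_format, OF F2nb evK2] by blast
      have D'W: "D' \<notin> W"
      proof
        assume "D' \<in> W"
        then have "eventually (\<lambda>x. x \<in> W) (nhds D')" by (rule eventually_nhds_in_open[OF W(1)])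
        then have e1: "eventually (\<lambda>x. x \<in> W) (inf (nhds D') F2)" by (rule filter_leD[rotated]) simp
        have "eventually (\<lambda>x. x \<in> - W) F2" unfolding F2_def eventually_inf_principal by simp
        then have e2: "eventually (\<lambda>x. x \<in> - W) (inf (nhds D') F2)" by (rule filter_leD[rotated]) simp
        have "eventually (\<lambda>x. False) (inf (nhds D') F2)"
          using eventually_conj[OF e1 e2] by (simp add: eventually_mono)
        then show False using D'G by (simp add: trivial_limit_def)
      qed
      have D'G2: "inf (nhds D') (filtermap q Fq) \<noteq> bot"
      proof
        assume "inf (nhds D') (filtermap q Fq) = bot"
        moreover have "inf (nhds D') F2 \<le> inf (nhds D') (filtermap q Fq)"
          unfolding F2_def by (simp add: le_infI2)
        ultimately show False using D'G by (simp add: bot_unique)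
      qed
      have "f (D' - D) = 0" if fc: "cont_linear f" for f :: "'f \<Rightarrow> real"
      proof -
        obtain d where dd: "((\<lambda>t. f (F t)) has_real_derivative d) (at t0 within S)" using der fc by blast
        have "f D' = d" by (rule cluster[OF D'G2 fc dd])
        moreover have "f D = d" by (rule cluster[OF DG fc dd])
        ultimately show ?thesis using fc unfolding cont_linear_def by (simp add: linear_diff)
      qed
      then have "D' - D = 0" using separating_functional[OF T LC] by blast
      then show False using D'W W(2) by simp
    qed
  qed
  have "((\<lambda>t. f' (F t)) has_real_derivative f' D) (at t0 within S)" if fc: "cont_linear f'" for f' :: "'f \<Rightarrow> real"
  proof -
    have fcont: "isCont f' D" using fc unfolding cont_linear_def
      by (simp add: continuous_on_eq_continuous_at)
    have "((\<lambda>t. f' (q t)) \<longlongrightarrow> f' D) Fq" by (rule isCont_tendsto_compose[OF fcont lim])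
    then show ?thesis unfolding has_field_derivative_iff Fq_def using quot[OF fc] by simp
  qed
  then show ?thesis using lim unfolding q_def Fq_def by blast
qed

lemma seminorm_dominate:
  fixes r :: "'a::real_vector \<Rightarrow> real" and g :: "'a \<Rightarrow> real"
  assumes r: "seminorm r" and gh: "\<And>c e. g (c *\<^sub>R e) = \<bar>c\<bar> * g e"
    and sub: "\<And>e. r e < 1 \<Longrightarrow> g e \<le> 1"
  shows "g e \<le> r e"
proof (rule field_le_epsilon)
  fix \<epsilon> :: real assume \<epsilon>: "\<epsilon> > 0"
  define s where "s = r e + \<epsilon>"
  have s: "s > 0" using \<epsilon> seminorm_nonneg[OF r, of e] by (simp add: s_def)
  have "r (inverse s *\<^sub>R e) = inverse s * r e" using seminorm_scale[OF r] s by simp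
  also have "\<dots> < 1" using s \<epsilon> by (simp add: s_def field_simps)
  finally have "g (inverse s *\<^sub>R e) \<le> 1" by (rule sub)
  then have "inverse s * g e \<le> 1" using gh s by simp
  then show "g e \<le> r e + \<epsilon>" using s by (simp add: s_def field_simps)
qed

lemma singleton_bounded:
  fixes e :: "'a::{real_vector,t2_space}"
  assumes T: "tvs_space TYPE('a)" and LC: "locally_convex_space TYPE('a)"
  shows "tvs_bounded {e}"
  unfolding tvs_bounded_iff[OF T LC] by auto

lemma closure_bounded:
  fixes B :: "'a::{real_vector,t2_space} set"
  assumes T: "tvs_space TYPE('a)" and LC: "locally_convex_space TYPE('a)" and B: "tvs_bounded B"
  shows "tvs_bounded (closure B)"
  unfolding tvs_bounded_iff[OF T LC]
proof (intro allI impI)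
  fix p :: "'a \<Rightarrow> real" assume p: "seminorm p \<and> continuous_on UNIV p"
  obtain K where K: "\<forall>b\<in>B. p b \<le> K" using B p unfolding tvs_bounded_iff[OF T LC] by blast
  have "closed {x. p x \<le> K}" by (rule closed_Collect_le) (use p in auto)
  moreover have "B \<subseteq> {x. p x \<le> K}" using K by auto
  ultimately have "closure B \<subseteq> {x. p x \<le> K}" by (rule closure_minimal[rotated])
  then show "\<exists>K. \<forall>b\<in>closure B. p b \<le> K" by blast
qed

lemma Lb_pointwise_cont:
  fixes Q :: "real \<Rightarrow> 'e::{real_vector,t2_space} \<Rightarrow> 'f::{real_vector,t2_space}"
  assumes Te: "tvs_space TYPE('e)" and LCe: "locally_convex_space TYPE('e)"
    and Tf: "tvs_space TYPE('f)" and LQ: "Lb_continuous_on S Q"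
  shows "continuous_on S (\<lambda>t. Q t e)"
  unfolding continuous_on_def
proof (intro ballI)
  fix x assume x: "x \<in> S"
  have Lt: "Lb_tendsto Q (Q x) (at x within S)" using LQ x unfolding Lb_continuous_on_def by blast
  show "((\<lambda>t. Q t e) \<longlongrightarrow> Q x e) (at x within S)"
    unfolding tendsto_def
  proof (intro allI impI)
    fix W assume W: "open W" "Q x e \<in> W"
    have o1: "open {z. z + Q x e \<in> W}"
      using tvs_open_preimage[OF tvs_add_cont[OF Tf continuous_on_id continuous_on_const]] W by blast
    have o2: "0 \<in> {z. z + Q x e \<in> W}" using W by simp
    have "eventually (\<lambda>s. \<forall>e'\<in>{e}. Q s e' - Q x e' \<in> {z. z + Q x e \<in> W}) (at x within S)"
      using Lt singleton_bounded[OF Te LCe, of e] o1 o2 unfolding Lb_tendsto_def by blast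
    then show "eventually (\<lambda>t. Q t e \<in> W) (at x within S)" by (auto elim: eventually_mono)
  qed
qed


lemma part_ii:
  fixes Q :: "real \<Rightarrow> 'e::{real_vector,t2_space} \<Rightarrow> 'f::{real_vector,t2_space}"
  assumes MoF: "montel_space TYPE('f)" and MoE: "montel_space TYPE('e)"
    and S: "compact S" "t0 \<in> S" and nb: "at t0 within S \<noteq> bot"
    and LQ: "Lb_continuous_on S Q"
    and der: "\<forall>e. \<forall>f'::'f \<Rightarrow> real. cont_linear f' \<longrightarrow>
           (\<exists>d. ((\<lambda>t. f' (Q t e)) has_real_derivative d) (at t0 within S))"
  shows "\<exists>D::'e \<Rightarrow> 'f. cont_linear D \<and>
           Lb_tendsto (\<lambda>t e. (1 / (t - t0)) *\<^sub>R (Q t e - Q t0 e)) D (at t0 within S) \<and>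
           (\<forall>e. \<forall>f'::'f \<Rightarrow> real. cont_linear f' \<longrightarrow>
              ((\<lambda>t. f' (Q t e)) has_real_derivative f' (D e)) (at t0 within S))"
proof -
  have Tf: "tvs_space TYPE('f)" and LCf: "locally_convex_space TYPE('f)"
    using MoF unfolding montel_space_def by auto
  have Te: "tvs_space TYPE('e)" and LCe: "locally_convex_space TYPE('e)"
    and BE: "barrelled_space TYPE('e)"
    and MBe: "\<And>B::'e set. tvs_bounded B \<Longrightarrow> closed B \<Longrightarrow> compact B"
    using MoE unfolding montel_space_def by auto
  define qt where "qt t e = (1 / (t - t0)) *\<^sub>R (Q t e - Q t0 e)" for t e
  define Fq where "Fq = at t0 within S"
  have cQ: "continuous_on S (\<lambda>t. Q t e)" for e by (rule Lb_pointwise_cont[OF Te LCe Tf LQ])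
  have QL: "cont_linear (Q t)" if "t \<in> S" for t using LQ that unfolding Lb_continuous_on_def by blast
  have qlin: "linear (qt t)" if tS: "t \<in> S" for t
  proof -
    have l1: "linear (Q t)" and l0: "linear (Q t0)" using QL[OF tS] QL[OF S(2)] unfolding cont_linear_def by auto
    show ?thesis
    proof (rule linearI)
      fix x y show "qt t (x + y) = qt t x + qt t y"
        unfolding qt_def using linear_add[OF l1] linear_add[OF l0] by (simp add: algebra_simps)
    next
      fix c :: real and x show "qt t (c *\<^sub>R x) = c *\<^sub>R qt t x"
        unfolding qt_def using linear_scale[OF l1] linear_scale[OF l0] by (simp add: algebra_simps)
    qed
  qed
  have qcont: "continuous_on UNIV (qt t)" if tS: "t \<in> S" for t
  proof -
    have c1: "continuous_on UNIV (Q t)" and c0: "continuous_on UNIV (Q t0)"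
      using QL[OF tS] QL[OF S(2)] unfolding cont_linear_def by auto
    show ?thesis unfolding qt_def
      by (intro tvs_scale_cont[OF Tf continuous_on_const] tvs_diff_cont[OF Tf c1 c0])
  qed
  have evS: "eventually (\<lambda>t. t \<in> S \<and> t \<noteq> t0) Fq"
    unfolding Fq_def eventually_at_filter by (rule always_eventually) auto
  have "\<forall>e. \<exists>D. ((\<lambda>t. qt t e) \<longlongrightarrow> D) Fq \<and>
           (\<forall>f'::'f \<Rightarrow> real. cont_linear f' \<longrightarrow>
              ((\<lambda>t. f' (Q t e)) has_real_derivative f' D) (at t0 within S))"
  proof
    fix e show "\<exists>D. ((\<lambda>t. qt t e) \<longlongrightarrow> D) Fq \<and>
           (\<forall>f'::'f \<Rightarrow> real. cont_linear f' \<longrightarrow>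
              ((\<lambda>t. f' (Q t e)) has_real_derivative f' D) (at t0 within S))"
      using part_i[OF MoF S nb cQ[of e]] der unfolding qt_def Fq_def by blast
  qed
  then obtain D where Dlim: "\<And>e. ((\<lambda>t. qt t e) \<longlongrightarrow> D e) Fq"
    and Dder: "\<And>e f'. cont_linear (f'::'f \<Rightarrow> real) \<Longrightarrow>
              ((\<lambda>t. f' (Q t e)) has_real_derivative f' (D e)) (at t0 within S)"
    by metis
  have Fqnb: "Fq \<noteq> bot" using nb by (simp add: Fq_def)
  have Dlin: "linear D"
  proof (rule linearI)
    fix x y
    have "((\<lambda>t. qt t x + qt t y) \<longlongrightarrow> D x + D y) Fq" by (rule tvs_tendsto_add[OF Tf Dlim Dlim])
    moreover have "eventually (\<lambda>t. qt t x + qt t y = qt t (x + y)) Fq"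
      using evS by (rule eventually_mono) (simp add: linear_add[OF qlin])
    ultimately have "((\<lambda>t. qt t (x + y)) \<longlongrightarrow> D x + D y) Fq" by (rule Lim_transform_eventually)
    then show "D (x + y) = D x + D y" using tendsto_unique[OF Fqnb Dlim] by blast
  next
    fix c :: real and x
    have "((\<lambda>t. c *\<^sub>R qt t x) \<longlongrightarrow> c *\<^sub>R D x) Fq" by (rule tvs_tendsto_scale[OF Tf tendsto_const Dlim])
    moreover have "eventually (\<lambda>t. c *\<^sub>R qt t x = qt t (c *\<^sub>R x)) Fq"
      using evS by (rule eventually_mono) (simp add: linear_scale[OF qlin])
    ultimately have "((\<lambda>t. qt t (c *\<^sub>R x)) \<longlongrightarrow> c *\<^sub>R D x) Fq" by (rule Lim_transform_eventually)
    then show "D (c *\<^sub>R x) = c *\<^sub>R D x" using tendsto_unique[OF Fqnb Dlim] by blast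
  qed
  have ptb: "tvs_bounded {qt t e | t. t \<in> S \<and> t \<noteq> t0}" for e
  proof (rule weakly_bounded_imp_bounded[OF Tf LCf])
    fix f :: "'f \<Rightarrow> real" assume fc: "cont_linear f"
    obtain d where "((\<lambda>t. f (Q t e)) has_real_derivative d) (at t0 within S)" using der fc by blast
    then show "\<exists>C. \<forall>a\<in>{qt t e | t. t \<in> S \<and> t \<noteq> t0}. \<bar>f a\<bar> \<le> C"
      using quot_weakly_bounded[OF S cQ[of e] fc] unfolding qt_def by blast
  qed
  have equi: "\<exists>r. seminorm r \<and> continuous_on UNIV r \<and>
       (\<forall>t\<in>S. t \<noteq> t0 \<longrightarrow> (\<forall>e. p (qt t e) \<le> r e))"
    if p: "seminorm p" "continuous_on UNIV p" for p :: "'f \<Rightarrow> real"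
  proof -
    define W where "W = (\<Inter>t\<in>S - {t0}. {e. p (qt t e) \<le> 1})"
    have ph: "p (qt t (c *\<^sub>R e)) = \<bar>c\<bar> * p (qt t e)" if tS: "t \<in> S" for t c e
      using linear_scale[OF qlin[OF tS]] seminorm_scale[OF p(1)] by simp
    have "tvs_barrel W" unfolding tvs_barrel_def
    proof (intro conjI)
      show "closed W" unfolding W_def
      proof (intro closed_INT ballI)
        fix t assume "t \<in> S - {t0}"
        then have tS: "t \<in> S" by blast
        have "continuous_on UNIV (\<lambda>e. p (qt t e))"
          by (rule continuous_on_compose2[OF p(2) qcont[OF tS]]) auto
        then show "closed {e. p (qt t e) \<le> 1}" by (intro closed_Collect_le continuous_on_const)
      qed
      show "convex W" unfolding convex_def W_def
      proof (intro ballI allI impI)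
        fix x y :: 'e and u v :: real
        assume x: "x \<in> (\<Inter>t\<in>S - {t0}. {e. p (qt t e) \<le> 1})"
          and y: "y \<in> (\<Inter>t\<in>S - {t0}. {e. p (qt t e) \<le> 1})" and uv: "0 \<le> u" "0 \<le> v" "u + v = 1"
        show "u *\<^sub>R x + v *\<^sub>R y \<in> (\<Inter>t\<in>S - {t0}. {e. p (qt t e) \<le> 1})"
        proof (intro InterI)
          fix X assume "X \<in> (\<lambda>t. {e. p (qt t e) \<le> 1}) ` (S - {t0})"
          then obtain t where t: "t \<in> S - {t0}" and X: "X = {e. p (qt t e) \<le> 1}" by blast
          have tS: "t \<in> S" using t by blast
          have "p (qt t (u *\<^sub>R x + v *\<^sub>R y)) = p (u *\<^sub>R qt t x + v *\<^sub>R qt t y)"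
            using linear_add[OF qlin[OF tS]] linear_scale[OF qlin[OF tS]] by simp
          also have "\<dots> \<le> u * p (qt t x) + v * p (qt t y)"
            using seminorm_add[OF p(1)] seminorm_scale[OF p(1)] uv by (smt (verit))
          also have "\<dots> \<le> u * 1 + v * 1"
            using x y t uv by (intro add_mono mult_left_mono) auto
          finally show "u *\<^sub>R x + v *\<^sub>R y \<in> X" using X uv by simp
        qed
      qed
      show "tvs_balanced W" unfolding tvs_balanced_def W_def
      proof (intro ballI allI impI)
        fix x and c :: real
        assume x: "x \<in> (\<Inter>t\<in>S - {t0}. {e. p (qt t e) \<le> 1})" and c: "\<bar>c\<bar> \<le> 1"
        show "c *\<^sub>R x \<in> (\<Inter>t\<in>S - {t0}. {e. p (qt t e) \<le> 1})"
        proof (intro InterI)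
          fix X assume "X \<in> (\<lambda>t. {e. p (qt t e) \<le> 1}) ` (S - {t0})"
          then obtain t where t: "t \<in> S - {t0}" and X: "X = {e. p (qt t e) \<le> 1}" by blast
          have tS: "t \<in> S" using t by blast
          have "p (qt t (c *\<^sub>R x)) = \<bar>c\<bar> * p (qt t x)" by (rule ph[OF tS])
          also have "\<dots> \<le> 1 * 1" using x t c seminorm_nonneg[OF p(1)] by (intro mult_mono) auto
          finally show "c *\<^sub>R x \<in> X" using X by simp
        qed
      qed
      show "tvs_absorbing W" unfolding tvs_absorbing_def
      proof
        fix x
        obtain K where K: "\<forall>b\<in>{qt t x | t. t \<in> S \<and> t \<noteq> t0}. p b \<le> K"
          using ptb[of x] p unfolding tvs_bounded_iff[OF Tf LCf] by blast
        define r where "r = 1 / (\<bar>K\<bar> + 1)"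
        have r: "r > 0" by (simp add: r_def)
        have "c *\<^sub>R x \<in> W" if c: "\<bar>c\<bar> \<le> r" for c
          unfolding W_def
        proof (intro InterI)
          fix X assume "X \<in> (\<lambda>t. {e. p (qt t e) \<le> 1}) ` (S - {t0})"
          then obtain t where t: "t \<in> S - {t0}" and X: "X = {e. p (qt t e) \<le> 1}" by blast
          have tS: "t \<in> S" using t by blast
          have pk: "p (qt t x) \<le> \<bar>K\<bar>" using K t by fastforce
          have "p (qt t (c *\<^sub>R x)) = \<bar>c\<bar> * p (qt t x)" by (rule ph[OF tS])
          also have "\<dots> \<le> r * (\<bar>K\<bar> + 1)"
            using c pk seminorm_nonneg[OF p(1)] by (intro mult_mono) auto
          also have "\<dots> = 1" by (simp add: r_def)
          finally show "c *\<^sub>R x \<in> X" using X by simp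
        qed
        then show "\<exists>r>0. \<forall>c. \<bar>c\<bar> \<le> r \<longrightarrow> c *\<^sub>R x \<in> W" using r by blast
      qed
    qed
    then have "0 \<in> interior W" using BE unfolding barrelled_space_def by blast
    then obtain Ob where Ob: "open Ob" "0 \<in> Ob" "Ob \<subseteq> W" by (meson interiorE)
    obtain r where r: "seminorm r" "continuous_on UNIV r" "{y. r y < 1} \<subseteq> Ob"
      using seminorm_base[OF Te LCe Ob(1,2)] by blast
    have "p (qt t e) \<le> r e" if tS: "t \<in> S" "t \<noteq> t0" for t e
    proof (rule seminorm_dominate[OF r(1), where g = "\<lambda>e. p (qt t e)"])
      show "p (qt t (c *\<^sub>R e)) = \<bar>c\<bar> * p (qt t e)" for c e by (rule ph[OF tS(1)])
      fix e assume "r e < 1"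
      then have "e \<in> W" using r(3) Ob(3) by blast
      then show "p (qt t e) \<le> 1" using tS unfolding W_def by blast
    qed
    then show ?thesis using r by blast
  qed
  have Dbound: "\<exists>r. seminorm r \<and> continuous_on UNIV r \<and> (\<forall>e. p (D e) \<le> r e) \<and>
       (\<forall>t\<in>S. t \<noteq> t0 \<longrightarrow> (\<forall>e. p (qt t e) \<le> r e))"
    if p: "seminorm p" "continuous_on UNIV p" for p :: "'f \<Rightarrow> real"
  proof -
    obtain r where r: "seminorm r" "continuous_on UNIV r" "\<forall>t\<in>S. t \<noteq> t0 \<longrightarrow> (\<forall>e. p (qt t e) \<le> r e)"
      using equi[OF p] by blast
    have "p (D e) \<le> r e" for e
    proof (rule tendsto_upperbound)
      have pc: "isCont p (D e)" using p(2) by (simp add: continuous_on_eq_continuous_at)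
      show "((\<lambda>t. p (qt t e)) \<longlongrightarrow> p (D e)) Fq" by (rule isCont_tendsto_compose[OF pc Dlim])
      show "eventually (\<lambda>t. r e \<ge> p (qt t e)) Fq" using evS by (rule eventually_mono) (use r(3) in blast)
      show "\<not> trivial_limit Fq" using Fqnb by simp
    qed
    then show ?thesis using r by blast
  qed
  have Dcont: "cont_linear D" unfolding cont_linear_def
  proof (intro conjI Dlin linear_cont_from0[OF Te Tf Dlin])
    fix V :: "'f set" assume V: "open V" "0 \<in> V"
    obtain p where p: "seminorm p" "continuous_on UNIV p" "{y. p y < 1} \<subseteq> V"
      using seminorm_base[OF Tf LCf V] by blast
    obtain r where r: "seminorm r" "continuous_on UNIV r" "\<forall>e. p (D e) \<le> r e"
      using Dbound[OF p(1,2)] by blast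
    have "open {e. r (e - 0) < 1}" by (rule seminorm_open_ball[OF Te r(2)])
    moreover have "0 \<in> {e. r (e - 0) < 1}" using seminorm_0[OF r(1)] by simp
    moreover have "D x \<in> V" if "x \<in> {e. r (e - 0) < 1}" for x
      using that r(3) p(3) by (smt (verit) diff_zero mem_Collect_eq subsetD)
    ultimately show "\<exists>U. open U \<and> 0 \<in> U \<and> (\<forall>x\<in>U. D x \<in> V)" by blast
  qed
  have Lbt: "Lb_tendsto qt D Fq" unfolding Lb_tendsto_def
  proof (intro allI impI)
    fix B :: "'e set" and U :: "'f set"
    assume B: "tvs_bounded B" and U: "open U \<and> 0 \<in> U"
    obtain p where p: "seminorm p" "continuous_on UNIV p" "{y. p y < 1} \<subseteq> U"
      using seminorm_base[OF Tf LCf] U by blast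
    obtain r where r: "seminorm r" "continuous_on UNIV r" "\<forall>e. p (D e) \<le> r e"
      "\<forall>t\<in>S. t \<noteq> t0 \<longrightarrow> (\<forall>e. p (qt t e) \<le> r e)"
      using Dbound[OF p(1,2)] by blast
    have Kc: "compact (closure B)" using MBe[OF closure_bounded[OF Te LCe B]] by simp
    obtain T where T: "T \<subseteq> closure B" "finite T" "closure B \<subseteq> (\<Union>k\<in>T. {e. r (e - k) < 1/4})"
    proof (rule compactE_image[OF Kc, of "closure B" "\<lambda>k. {e. r (e - k) < 1/4}"])
      show "open {e. r (e - k) < 1/4}" for k by (rule seminorm_open_ball[OF Te r(2)])
      show "closure B \<subseteq> (\<Union>k\<in>closure B. {e. r (e - k) < 1/4})"
        using seminorm_0[OF r(1)] by auto
    qed blast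
    have evk: "eventually (\<lambda>t. p (qt t k - D k) < 1/4) Fq" for k
    proof -
      have "((\<lambda>t. qt t k + (- D k)) \<longlongrightarrow> D k + (- D k)) Fq"
        by (rule tvs_tendsto_add[OF Tf Dlim tendsto_const])
      then have "((\<lambda>t. qt t k - D k) \<longlongrightarrow> 0) Fq" by simp
      moreover have "isCont p 0" using p(2) by (simp add: continuous_on_eq_continuous_at)
      ultimately have "((\<lambda>t. p (qt t k - D k)) \<longlongrightarrow> p 0) Fq" using isCont_tendsto_compose by blast
      then have "((\<lambda>t. p (qt t k - D k)) \<longlongrightarrow> 0) Fq" using seminorm_0[OF p(1)] by simp
      then show ?thesis by (rule order_tendstoD) simp
    qed
    have "eventually (\<lambda>t. \<forall>k\<in>T. p (qt t k - D k) < 1/4) Fq"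
      by (rule eventually_ball_finite[OF T(2)]) (use evk in blast)
    then have "eventually (\<lambda>t. (t \<in> S \<and> t \<noteq> t0) \<and> (\<forall>k\<in>T. p (qt t k - D k) < 1/4)) Fq"
      by (rule eventually_conj[OF evS])
    then show "eventually (\<lambda>t. \<forall>e\<in>B. qt t e - D e \<in> U) Fq"
    proof (rule eventually_mono)
      fix t assume t: "(t \<in> S \<and> t \<noteq> t0) \<and> (\<forall>k\<in>T. p (qt t k - D k) < 1/4)"
      show "\<forall>e\<in>B. qt t e - D e \<in> U"
      proof
        fix e assume e: "e \<in> B"
        then have "e \<in> closure B" using closure_subset by blast
        then obtain k where k: "k \<in> T" "r (e - k) < 1/4" using T(3) by blast
        have tS: "t \<in> S" using t by blast
        have l1: "qt t (e - k) = qt t e - qt t k" by (rule linear_diff[OF qlin[OF tS]])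
        have l2: "D (e - k) = D e - D k" by (rule linear_diff[OF Dlin])
        have "qt t e - D e = (qt t k - D k) + qt t (e - k) + (- D (e - k))"
          unfolding l1 l2 by (simp add: algebra_simps)
        then have "p (qt t e - D e) \<le> p (qt t k - D k) + p (qt t (e - k)) + p (- D (e - k))"
          using seminorm_triangle3[OF p(1), of "qt t k - D k" "qt t (e - k)" "- D (e - k)"] by (simp only:)
        also have "\<dots> < 1/4 + 1/4 + 1/4"
        proof -
          have a1: "p (qt t k - D k) < 1/4" using t k(1) by blast
          have a2: "p (qt t (e - k)) \<le> r (e - k)" using r(4) t by blast
          have a3: "p (- D (e - k)) \<le> r (e - k)" using r(3) seminorm_minus[OF p(1)] by simp
          show ?thesis using a1 a2 a3 k(2) by linarith
        qed
        finally have "p (qt t e - D e) < 1" by simp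
        then show "qt t e - D e \<in> U" using p(3) by blast
      qed
    qed
  qed
  show ?thesis
    using Dcont Lbt Dder unfolding qt_def Fq_def by blast
qed


theorem lemma7p13:
  fixes t0 \<epsilon> :: real
    and S :: "real set"
  assumes montelF: "montel_space TYPE('f::{real_vector,t2_space})"
    and eps: "\<epsilon> > 0"
    and S: "S \<in> {{t0..t0+\<epsilon>}, {t0-\<epsilon>..t0}, {t0-\<epsilon>..t0+\<epsilon>}}"
  shows
    "(\<forall>F :: real \<Rightarrow> 'f.
        continuous_on S F \<and>
        (\<forall>f'::'f \<Rightarrow> real. cont_linear f' \<longrightarrow>
           (\<exists>d. ((\<lambda>t. f' (F t)) has_real_derivative d) (at t0 within S)))
      \<longrightarrow>
        (\<exists>D::'f.
           ((\<lambda>t. (1 / (t - t0)) *\<^sub>R (F t - F t0)) \<longlongrightarrow> D) (at t0 within S) \<and>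
           (\<forall>f'::'f \<Rightarrow> real. cont_linear f' \<longrightarrow>
              ((\<lambda>t. f' (F t)) has_real_derivative f' D) (at t0 within S))))
     \<and>
     (montel_space TYPE('e::{real_vector,t2_space}) \<longrightarrow>
      (\<forall>Q :: real \<Rightarrow> 'e \<Rightarrow> 'f.
        Lb_continuous_on S Q \<and>
        (\<forall>e. \<forall>f'::'f \<Rightarrow> real. cont_linear f' \<longrightarrow>
           (\<exists>d. ((\<lambda>t. f' (Q t e)) has_real_derivative d) (at t0 within S)))
      \<longrightarrow>
        (\<exists>D::'e \<Rightarrow> 'f. cont_linear D \<and>
           Lb_tendsto (\<lambda>t e. (1 / (t - t0)) *\<^sub>R (Q t e - Q t0 e)) D (at t0 within S) \<and>
           (\<forall>e. \<forall>f'::'f \<Rightarrow> real. cont_linear f' \<longrightarrow>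
              ((\<lambda>t. f' (Q t e)) has_real_derivative f' (D e)) (at t0 within S)))))"
  proof -
  have St: "compact S \<and> t0 \<in> S \<and> at t0 within S \<noteq> bot"
  proof -
    have c1: "S = {t0..t0+\<epsilon>} \<or> S = {t0-\<epsilon>..t0} \<or> S = {t0-\<epsilon>..t0+\<epsilon>}" using S by simp
    show ?thesis
    proof (rule disjE[OF c1])
      assume SS: "S = {t0..t0+\<epsilon>}"
      have "at t0 within S = at_right t0" unfolding SS by (rule at_within_Icc_at_right) (use eps in simp)
      then show ?thesis using eps SS by (simp add: trivial_limit_at_right_real)
    next
      assume "S = {t0-\<epsilon>..t0} \<or> S = {t0-\<epsilon>..t0+\<epsilon>}"
      then show ?thesis
      proof
        assume SS: "S = {t0-\<epsilon>..t0}"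
        have "at t0 within S = at_left t0" unfolding SS by (rule at_within_Icc_at_left) (use eps in simp)
        then show ?thesis using eps SS by (simp add: trivial_limit_at_left_real)
      next
        assume SS: "S = {t0-\<epsilon>..t0+\<epsilon>}"
        have "at t0 within S = at t0" unfolding SS by (rule at_within_Icc_at) (use eps in simp)+
        then show ?thesis using eps SS by simp
      qed
    qed
  qed
  show ?thesis
  proof (intro conjI allI impI)
    fix F :: "real \<Rightarrow> 'f"
    assume H: "continuous_on S F \<and>
        (\<forall>f'::'f \<Rightarrow> real. cont_linear f' \<longrightarrow>
           (\<exists>d. ((\<lambda>t. f' (F t)) has_real_derivative d) (at t0 within S)))"
    show "\<exists>D::'f.
           ((\<lambda>t. (1 / (t - t0)) *\<^sub>R (F t - F t0)) \<longlongrightarrow> D) (at t0 within S) \<and>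
           (\<forall>f'::'f \<Rightarrow> real. cont_linear f' \<longrightarrow>
              ((\<lambda>t. f' (F t)) has_real_derivative f' D) (at t0 within S))"
      using part_i[OF montelF] St H by blast
  next
    fix Q :: "real \<Rightarrow> 'e \<Rightarrow> 'f"
    assume ME: "montel_space TYPE('e::{real_vector,t2_space})"
      and H: "Lb_continuous_on S Q \<and>
        (\<forall>e. \<forall>f'::'f \<Rightarrow> real. cont_linear f' \<longrightarrow>
           (\<exists>d. ((\<lambda>t. f' (Q t e)) has_real_derivative d) (at t0 within S)))"
    show "\<exists>D::'e \<Rightarrow> 'f. cont_linear D \<and>
           Lb_tendsto (\<lambda>t e. (1 / (t - t0)) *\<^sub>R (Q t e - Q t0 e)) D (at t0 within S) \<and>
           (\<forall>e. \<forall>f'::'f \<Rightarrow> real. cont_linear f' \<longrightarrow>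
              ((\<lambda>t. f' (Q t e)) has_real_derivative f' (D e)) (at t0 within S))"
      using part_ii[OF montelF ME] St H by blast
  qed
qed

end
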